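(* Let $\Lambda$ be a row-finite $k$-graph with no sources and $R$ a commutative ring with $1$. Let $a$ be a nonzero element of the center $Z(\mathrm{KP}_R(\Lambda))$, written in normal form $a=\sum_{(\alpha,\beta)\in F}r_{\alpha,\beta}s_\alpha s_{\beta^*}$. Then: (1) for every $(\sigma,\tau)\in F$, $r(\sigma)=r(\tau)$; (2) setting $W=\{v\in\Lambda^0:\ v=r(\beta)\text{ for some }(\alpha,\beta)\in F\}$, if $\mu\in\Lambda$ satisfies $s(\mu)\in W$ then $r(\mu)\in W$; (3) for every $(\sigma,\tau)\in F$ there is $(\alpha,\beta)\in F$ with $r(\alpha)=r(\beta)=s(\sigma)=s(\tau)$; (4) there exist $l\in\mathbb{N}\setminus\{0\}$ and $(\alpha_1,\beta_1),\dots,(\alpha_l,\beta_l)\in F$ such that the composite $\beta_1\cdots\beta_l$ is defined and is a closed path, i.e. $r(\beta_1\cdots\beta_l)=s(\beta_1\cdots\beta_l)$.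
   Context: A $k$-graph is a countable category $\Lambda$ with a functor $d:\Lambda\to\mathbb{N}^k$ ($\mathbb{N}^k$ a one-object category under addition) with unique factorization: whenever $d(\lambda)=m+n$ there are unique $\mu,\nu$ with $d(\mu)=m,d(\nu)=n,\lambda=\mu\nu$. $\Lambda^0$ = vertices (degree-$0$ morphisms), $\Lambda^n=d^{-1}(n)$, $r,s$ range and source, $\lambda\mu$ defined when $s(\lambda)=r(\mu)$, $v\Lambda^n=\{\lambda\in\Lambda^n:r(\lambda)=v\}$. Row-finite: $v\Lambda^n$ finite; no sources: $v\Lambda^n\ne\emptyset$. Kumjian-Pask $\Lambda$-family in an $R$-algebra $A$: $P:\Lambda^0\to A$, $S:\Lambda^{\ne0}\cup\{\lambda^*:\lambda\in\Lambda^{\neq0}\}\to A$ with (KP1) $P_v$ mutually orthogonal idempotents; (KP2) for $r(\mu)=s(\lambda)$: $S_\lambda S_\mu=S_{\lambda\mu}$, $S_{\mu^*}S_{\lambda^*}=S_{(\lambda\mu)^*}$, $P_{r(\lambda)}S_\lambda=S_\lambda=S_\lambda P_{s(\lambda)}$, $P_{s(\lambda)}S_{\lambda^*}=S_{\lambda^*}=S_{\lambda^*}P_{r(\lambda)}$; (KP3) $S_{\lambda^*}S_\mu=\delta_{\lambda,\mu}P_{s(\lambda)}$ when $d(\lambda)=d(\mu)$; (KP4) $P_v=\sum_{\lambda\in v\Lambda^n}S_\lambda S_{\lambda^*}$ for $n\ne0$. $\mathrm{KP}_R(\Lambda)$ is the $R$-algebra generated by a universal such family $(p,s)$; for a vertex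 $v$, $s_v=s_{v^*}=p_v$. Normal form: a nonzero $a\in\mathrm{KP}_R(\Lambda)$ is written in normal form $a=\sum_{(\alpha,\beta)\in F}r_{\alpha,\beta}s_\alpha s_{\beta^*}$ if there is $m\in\mathbb{N}^k$ with $F\subset\Lambda\times\Lambda^m$ finite, every $r_{\alpha,\beta}\in R\setminus\{0\}$, and $s(\alpha)=s(\beta)$ for all $(\alpha,\beta)\in F$. (Every nonzero element admits such a form.) *)

theory Defs
  imports "HOL-Algebra.QuotRing" "HOL-Library.Countable_Set"
begin

text \<open>A k-graph is given by its set of morphisms, range and source maps (whose
values are the identity morphisms = vertices), composition (comp l m = l m,
defined when src l = rng m) and the degree functor into N^k, where N^k is
represented as functions 'k => nat for a finite index type 'k (k = CARD('k)).\<close>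

record ('a, 'k) kgraph =
  kg_arr  :: "'a set"
  kg_rng  :: "'a \<Rightarrow> 'a"
  kg_src  :: "'a \<Rightarrow> 'a"
  kg_comp :: "'a \<Rightarrow> 'a \<Rightarrow> 'a"
  kg_deg  :: "'a \<Rightarrow> 'k \<Rightarrow> nat"

definition kg_vertices :: "('a, 'k) kgraph \<Rightarrow> 'a set" where
  "kg_vertices G = {v \<in> kg_arr G. kg_deg G v = (\<lambda>_. 0)}"

definition is_kgraph :: "('a, 'k::finite) kgraph \<Rightarrow> bool" where
  "is_kgraph G \<longleftrightarrow>
     countable (kg_arr G) \<and>
     (\<forall>l\<in>kg_arr G. kg_rng G l \<in> kg_vertices G \<and> kg_src G l \<in> kg_vertices G) \<and>
     (\<forall>v\<in>kg_vertices G. kg_rng G v = v \<and> kg_src G v = v) \<and>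
     (\<forall>l\<in>kg_arr G. \<forall>m\<in>kg_arr G. kg_src G l = kg_rng G m \<longrightarrow>
         kg_comp G l m \<in> kg_arr G \<and>
         kg_rng G (kg_comp G l m) = kg_rng G l \<and>
         kg_src G (kg_comp G l m) = kg_src G m \<and>
         kg_deg G (kg_comp G l m) = (\<lambda>i. kg_deg G l i + kg_deg G m i)) \<and>
     (\<forall>l\<in>kg_arr G. kg_comp G (kg_rng G l) l = l \<and> kg_comp G l (kg_src G l) = l) \<and>
     (\<forall>l\<in>kg_arr G. \<forall>m\<in>kg_arr G. \<forall>n\<in>kg_arr G.
         kg_src G l = kg_rng G m \<longrightarrow> kg_src G m = kg_rng G n \<longrightarrow>
         kg_comp G (kg_comp G l m) n = kg_comp G l (kg_comp G m n)) \<and>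
     (\<forall>l\<in>kg_arr G. \<forall>m n. kg_deg G l = (\<lambda>i. m i + n i) \<longrightarrow>
         (\<exists>!p. fst p \<in> kg_arr G \<and> snd p \<in> kg_arr G \<and>
               kg_src G (fst p) = kg_rng G (snd p) \<and>
               kg_deg G (fst p) = m \<and> kg_deg G (snd p) = n \<and>
               l = kg_comp G (fst p) (snd p)))"

definition row_finite :: "('a, 'k) kgraph \<Rightarrow> bool" where
  "row_finite G \<longleftrightarrow> (\<forall>v\<in>kg_vertices G. \<forall>n.
      finite {l \<in> kg_arr G. kg_rng G l = v \<and> kg_deg G l = n})"

definition no_sources :: "('a, 'k) kgraph \<Rightarrow> bool" where
  "no_sources G \<longleftrightarrow> (\<forall>v\<in>kg_vertices G. \<forall>n.
      {l \<in> kg_arr G. kg_rng G l = v \<and> kg_deg G l = n} \<noteq> {})"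

fun kg_comp_list :: "('a, 'k) kgraph \<Rightarrow> 'a list \<Rightarrow> 'a" where
  "kg_comp_list G [] = undefined"
| "kg_comp_list G [b] = b"
| "kg_comp_list G (b # bs) = kg_comp G b (kg_comp_list G bs)"

text \<open>Generators: Pg v = p_v, Sg l = s_l, Tg l = s_{l*}.\<close>
datatype 'a kpgen = Pg 'a | Sg 'a | Tg 'a

definition valid_gen :: "('a, 'k) kgraph \<Rightarrow> 'a kpgen \<Rightarrow> bool" where
  "valid_gen G g = (case g of
      Pg v \<Rightarrow> v \<in> kg_vertices G
    | Sg l \<Rightarrow> l \<in> kg_arr G \<and> kg_deg G l \<noteq> (\<lambda>_. 0)
    | Tg l \<Rightarrow> l \<in> kg_arr G \<and> kg_deg G l \<noteq> (\<lambda>_. 0))"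

text \<open>The free (noncommutative, unital) R-algebra on the valid generators:
finitely supported R-valued functions on words, with convolution product.\<close>

definition fa_carrier :: "('a, 'k) kgraph \<Rightarrow> ('a kpgen list \<Rightarrow> 'r::comm_ring_1) set" where
  "fa_carrier G = {f. finite {w. f w \<noteq> 0} \<and>
                      (\<forall>w. f w \<noteq> 0 \<longrightarrow> set w \<subseteq> Collect (valid_gen G))}"

definition fa_mult :: "('g list \<Rightarrow> 'r::comm_ring_1) \<Rightarrow> ('g list \<Rightarrow> 'r) \<Rightarrow> 'g list \<Rightarrow> 'r" where
  "fa_mult f g = (\<lambda>w. \<Sum>i\<le>length w. f (take i w) * g (drop i w))"

definition fa_mono :: "'r::comm_ring_1 \<Rightarrow> 'g list \<Rightarrow> 'g list \<Rightarrow> 'r" where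
  "fa_mono c w = (\<lambda>u. if u = w then c else 0)"

definition free_alg :: "('a, 'k) kgraph \<Rightarrow> ('a kpgen list \<Rightarrow> 'r::comm_ring_1) ring" where
  "free_alg G = \<lparr>carrier = fa_carrier G, mult = fa_mult, one = fa_mono 1 [],
                 zero = (\<lambda>_. 0), add = (\<lambda>f g w. f w + g w)\<rparr>"

text \<open>Convention s_v = s_{v*} = p_v for vertices.\<close>
definition sw :: "('a, 'k) kgraph \<Rightarrow> 'a \<Rightarrow> 'a kpgen list" where
  "sw G l = (if kg_deg G l = (\<lambda>_. 0) then [Pg l] else [Sg l])"

definition swstar :: "('a, 'k) kgraph \<Rightarrow> 'a \<Rightarrow> 'a kpgen list" where
  "swstar G l = (if kg_deg G l = (\<lambda>_. 0) then [Pg l] else [Tg l])"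

text \<open>The relations (KP1)-(KP4), each as an element lhs - rhs of the free algebra.
(KP2) is stated for all composable pairs, including vertices (with s_v = p_v),
which gives exactly the identities of (KP2) in the paper together with p_v p_v = p_v.\<close>
definition kp_rels :: "('a, 'k) kgraph \<Rightarrow> ('a kpgen list \<Rightarrow> 'r::comm_ring_1) set" where
  "kp_rels G =
     {(\<lambda>u. fa_mono 1 [Pg v, Pg w] u - (if v = w then fa_mono 1 [Pg v] u else 0)) | v w.
        v \<in> kg_vertices G \<and> w \<in> kg_vertices G}
   \<union> {(\<lambda>u. fa_mono 1 (sw G l @ sw G m) u - fa_mono 1 (sw G (kg_comp G l m)) u) | l m.
        l \<in> kg_arr G \<and> m \<in> kg_arr G \<and> kg_src G l = kg_rng G m}
   \<union> {(\<lambda>u. fa_mono 1 (swstar G m @ swstar G l) u - fa_mono 1 (swstar G (kg_comp G l m)) u) | l m.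
        l \<in> kg_arr G \<and> m \<in> kg_arr G \<and> kg_src G l = kg_rng G m}
   \<union> {(\<lambda>u. fa_mono 1 (swstar G l @ sw G m) u - (if l = m then fa_mono 1 [Pg (kg_src G l)] u else 0)) | l m.
        l \<in> kg_arr G \<and> m \<in> kg_arr G \<and> kg_deg G l = kg_deg G m \<and> kg_deg G l \<noteq> (\<lambda>_. 0)}
   \<union> {(\<lambda>u. fa_mono 1 [Pg v] u - (\<Sum>l\<in>{l \<in> kg_arr G. kg_rng G l = v \<and> kg_deg G l = n}.
                                     fa_mono 1 (sw G l @ swstar G l) u)) | v n.
        v \<in> kg_vertices G \<and> n \<noteq> (\<lambda>_. 0)}"

definition kp_ideal :: "('a, 'k) kgraph \<Rightarrow> ('a kpgen list \<Rightarrow> 'r::comm_ring_1) set" where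
  "kp_ideal G = genideal (free_alg G) (kp_rels G)"

definition KP :: "('a, 'k) kgraph \<Rightarrow> ('a kpgen list \<Rightarrow> 'r::comm_ring_1) set ring" where
  "KP G = free_alg G Quot kp_ideal G"

definition kp_class :: "('a, 'k) kgraph \<Rightarrow> ('a kpgen list \<Rightarrow> 'r::comm_ring_1) \<Rightarrow> ('a kpgen list \<Rightarrow> 'r) set" where
  "kp_class G f = a_r_coset (free_alg G) (kp_ideal G) f"

definition kp_scal :: "('a, 'k) kgraph \<Rightarrow> 'r::comm_ring_1 \<Rightarrow> ('a kpgen list \<Rightarrow> 'r) set" where
  "kp_scal G c = kp_class G (fa_mono c [])"

definition kp_s :: "('a, 'k) kgraph \<Rightarrow> 'a \<Rightarrow> ('a kpgen list \<Rightarrow> 'r::comm_ring_1) set" where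
  "kp_s G l = kp_class G (fa_mono 1 (sw G l))"

definition kp_sstar :: "('a, 'k) kgraph \<Rightarrow> 'a \<Rightarrow> ('a kpgen list \<Rightarrow> 'r::comm_ring_1) set" where
  "kp_sstar G l = kp_class G (fa_mono 1 (swstar G l))"

definition kp_center :: "('a, 'k) kgraph \<Rightarrow> ('a kpgen list \<Rightarrow> 'r::comm_ring_1) set set" where
  "kp_center G = {z \<in> carrier (KP G). \<forall>y\<in>carrier (KP G).
                     z \<otimes>\<^bsub>KP G\<^esub> y = y \<otimes>\<^bsub>KP G\<^esub> z}"

end

theory Submission
  imports Defs
begin

definition splits :: "'g list \<Rightarrow> ('g list \<times> 'g list) set" where
  "splits w = {(u,v). u @ v = w}"

lemma splits_eq: "splits w = (\<lambda>i. (take i w, drop i w)) ` {..length w}"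
proof -
  have "p \<in> (\<lambda>i. (take i w, drop i w)) ` {..length w}" if "p \<in> splits w" for p
  proof -
    from that obtain u v where "p = (u,v)" "u @ v = w" by (auto simp: splits_def)
    then show ?thesis
      by (auto simp: image_iff intro!: bexI[of _ "length u"])
  qed
  then show ?thesis by (auto simp: splits_def)
qed

lemma finite_splits[simp]: "finite (splits w)"
  by (simp add: splits_eq)

lemma fa_mult_alt: "fa_mult x y w = (\<Sum>p\<in>splits w. x (fst p) * y (snd p))"
proof -
  have "inj_on (\<lambda>i. (take i w, drop i w)) {..length w}"
    by (auto simp: inj_on_def) (metis length_take min.absorb2)
  then show ?thesis unfolding fa_mult_def splits_eq
    by (simp add: sum.reindex)
qed

lemma fa_mult_assoc: "fa_mult (fa_mult x y) z = fa_mult x (fa_mult y z)"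
proof
  fix w
  have "fa_mult (fa_mult x y) z w = (\<Sum>p\<in>splits w. \<Sum>q\<in>splits (fst p). x (fst q) * y (snd q) * z (snd p))"
    by (simp add: fa_mult_alt sum_distrib_right)
  also have "\<dots> = (\<Sum>pq\<in>Sigma (splits w) (\<lambda>p. splits (fst p)). x (fst (snd pq)) * y (snd (snd pq)) * z (snd (fst pq)))"
    by (simp add: sum.Sigma split_def)
  also have "\<dots> = (\<Sum>pq\<in>Sigma (splits w) (\<lambda>p. splits (snd p)). x (fst (fst pq)) * (y (fst (snd pq)) * z (snd (snd pq))))"
    by (rule sum.reindex_bij_witness[where i="\<lambda>((u,q),(v,t)). ((u@v,t),(u,v))" and j="\<lambda>((p,t),(u,v)). ((u,v@t),(v,t))"])
       (auto simp: splits_def mult.assoc)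
  also have "\<dots> = (\<Sum>p\<in>splits w. \<Sum>q\<in>splits (snd p). x (fst p) * (y (fst q) * z (snd q)))"
    by (simp add: sum.Sigma split_def)
  also have "\<dots> = fa_mult x (fa_mult y z) w"
    by (simp add: fa_mult_alt sum_distrib_left)
  finally show "fa_mult (fa_mult x y) z w = fa_mult x (fa_mult y z) w" .
qed

lemma fa_mult_one_left: "fa_mult (fa_mono 1 []) x = x"
proof
  fix w
  have "fa_mult (fa_mono 1 []) x w = (\<Sum>p\<in>splits w. if p = ([], w) then x w else 0)"
    unfolding fa_mult_alt by (rule sum.cong) (auto simp: fa_mono_def splits_def)
  also have "\<dots> = x w" by (simp add: sum.delta' splits_def[symmetric]) (simp add: splits_def)
  finally show "fa_mult (fa_mono 1 []) x w = x w" .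
qed

lemma fa_mult_one_right: "fa_mult x (fa_mono 1 []) = x"
proof
  fix w
  have "fa_mult x (fa_mono 1 []) w = (\<Sum>p\<in>splits w. if p = (w, []) then x w else 0)"
    unfolding fa_mult_alt by (rule sum.cong) (auto simp: fa_mono_def splits_def)
  also have "\<dots> = x w" by (simp add: sum.delta' splits_def[symmetric]) (simp add: splits_def)
  finally show "fa_mult x (fa_mono 1 []) w = x w" .
qed

lemma fa_mult_distl: "fa_mult x (\<lambda>w. y w + z w) = (\<lambda>w. fa_mult x y w + fa_mult x z w)"
  by (auto simp: fa_mult_def distrib_left sum.distrib)

lemma fa_mult_distr: "fa_mult (\<lambda>w. x w + y w) z = (\<lambda>w. fa_mult x z w + fa_mult y z w)"
  by (auto simp: fa_mult_def distrib_right sum.distrib)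

definition supp :: "('g list \<Rightarrow> 'r::zero) \<Rightarrow> 'g list set" where
  "supp x = {w. x w \<noteq> 0}"

lemma fa_mult_supp: "supp (fa_mult x y) \<subseteq> (\<lambda>p. fst p @ snd p) ` (supp x \<times> supp y)"
proof
  fix w assume "w \<in> supp (fa_mult x y)"
  then have "(\<Sum>p\<in>splits w. x (fst p) * y (snd p)) \<noteq> 0" by (simp add: supp_def fa_mult_alt)
  then obtain p where "p \<in> splits w" "x (fst p) * y (snd p) \<noteq> 0" by (meson sum.neutral)
  then show "w \<in> (\<lambda>p. fst p @ snd p) ` (supp x \<times> supp y)"
    by (auto simp: supp_def splits_def image_iff intro!: bexI[of _ p]) (metis mult_zero_left mult_zero_right)
qed

lemma carrier_iff: "x \<in> fa_carrier G \<longleftrightarrow> finite (supp x) \<and> (\<forall>w\<in>supp x. set w \<subseteq> Collect (valid_gen G))"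
  by (auto simp: fa_carrier_def supp_def)

lemma mult_closed: assumes "x \<in> fa_carrier G" "y \<in> fa_carrier G" shows "fa_mult x y \<in> fa_carrier G"
proof -
  have "finite (supp x \<times> supp y)" using assms by (simp add: carrier_iff)
  then have "finite (supp (fa_mult x y))"
    using finite_subset[OF fa_mult_supp finite_imageI] by blast
  moreover have "\<forall>w\<in>supp (fa_mult x y). set w \<subseteq> Collect (valid_gen G)"
    using fa_mult_supp[of x y] assms unfolding carrier_iff by fastforce
  ultimately show ?thesis by (simp add: carrier_iff)
qed

lemma mono_carrier: "set w \<subseteq> Collect (valid_gen G) \<Longrightarrow> fa_mono c w \<in> fa_carrier G"
  by (auto simp: fa_carrier_def fa_mono_def)

lemma add_closed: assumes "x \<in> fa_carrier G" "y \<in> fa_carrier G" shows "(\<lambda>w. x w + y w) \<in> fa_carrier G"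
proof -
  have "supp (\<lambda>w. x w + y w) \<subseteq> supp x \<union> supp y" by (auto simp: supp_def)
  then show ?thesis using assms unfolding carrier_iff by (meson Un_iff finite_Un rev_finite_subset subsetD)
qed

lemma zero_carrier: "(\<lambda>_. 0) \<in> fa_carrier G" by (simp add: fa_carrier_def)

lemma free_alg_ring: "ring (free_alg G)"
proof (rule ringI)
  show "abelian_group (free_alg G)"
  proof (rule abelian_groupI)
    fix x assume x: "x \<in> carrier (free_alg G)"
    then have "(\<lambda>w. - x w) \<in> carrier (free_alg G)"
      by (auto simp: free_alg_def fa_carrier_def)
    then show "\<exists>y\<in>carrier (free_alg G). y \<oplus>\<^bsub>free_alg G\<^esub> x = \<zero>\<^bsub>free_alg G\<^esub>"
      by (auto simp: free_alg_def intro!: bexI[of _ "\<lambda>w. - x w"])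
  qed (auto simp: free_alg_def add_closed zero_carrier add.assoc add.commute)
  show "monoid (free_alg G)"
    by (rule monoidI) (auto simp: free_alg_def mult_closed mono_carrier fa_mult_assoc fa_mult_one_left fa_mult_one_right)
qed (auto simp: free_alg_def fa_mult_distl fa_mult_distr)


locale kg = fixes G :: "('a, 'k::finite) kgraph" assumes kg: "is_kgraph G"
begin

lemmas K1 = kg[unfolded is_kgraph_def, THEN conjunct2, THEN conjunct1]
lemmas K2 = kg[unfolded is_kgraph_def, THEN conjunct2, THEN conjunct2, THEN conjunct1]
lemmas K3 = kg[unfolded is_kgraph_def, THEN conjunct2, THEN conjunct2, THEN conjunct2, THEN conjunct1]
lemmas K4 = kg[unfolded is_kgraph_def, THEN conjunct2, THEN conjunct2, THEN conjunct2, THEN conjunct2, THEN conjunct1]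
lemmas K5 = kg[unfolded is_kgraph_def, THEN conjunct2, THEN conjunct2, THEN conjunct2, THEN conjunct2, THEN conjunct2, THEN conjunct1]
lemmas K6 = kg[unfolded is_kgraph_def, THEN conjunct2, THEN conjunct2, THEN conjunct2, THEN conjunct2, THEN conjunct2, THEN conjunct2]

abbreviation "arr \<equiv> kg_arr G"
abbreviation "rng \<equiv> kg_rng G"
abbreviation "src \<equiv> kg_src G"
abbreviation "cmp \<equiv> kg_comp G"
abbreviation "deg \<equiv> kg_deg G"

lemma rng_vert: "l \<in> arr \<Longrightarrow> rng l \<in> kg_vertices G"
  using K1 by blast
lemma src_vert: "l \<in> arr \<Longrightarrow> src l \<in> kg_vertices G"
  using K1 by blast
lemma vert_rng: "v \<in> kg_vertices G \<Longrightarrow> rng v = v"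
  using K2 by blast
lemma vert_src: "v \<in> kg_vertices G \<Longrightarrow> src v = v"
  using K2 by blast
lemma vert_arr: "v \<in> kg_vertices G \<Longrightarrow> v \<in> arr"
  by (simp add: kg_vertices_def)
lemma vert_deg: "v \<in> kg_vertices G \<Longrightarrow> deg v = (\<lambda>_. 0)"
  by (simp add: kg_vertices_def)
lemma rng_arr: "l \<in> arr \<Longrightarrow> rng l \<in> arr" by (simp add: rng_vert vert_arr)
lemma src_arr: "l \<in> arr \<Longrightarrow> src l \<in> arr" by (simp add: src_vert vert_arr)
lemma rng_rng[simp]: "l \<in> arr \<Longrightarrow> rng (rng l) = rng l" by (simp add: rng_vert vert_rng)
lemma src_src[simp]: "l \<in> arr \<Longrightarrow> src (src l) = src l" by (simp add: src_vert vert_src)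
lemma rng_src[simp]: "l \<in> arr \<Longrightarrow> rng (src l) = src l" by (simp add: src_vert vert_rng)
lemma src_rng[simp]: "l \<in> arr \<Longrightarrow> src (rng l) = rng l" by (simp add: rng_vert vert_src)

lemma comp_arr: "l \<in> arr \<Longrightarrow> m \<in> arr \<Longrightarrow> src l = rng m \<Longrightarrow> cmp l m \<in> arr"
  using K3 by blast
lemma comp_rng[simp]: "l \<in> arr \<Longrightarrow> m \<in> arr \<Longrightarrow> src l = rng m \<Longrightarrow> rng (cmp l m) = rng l"
  using K3 by blast
lemma comp_src[simp]: "l \<in> arr \<Longrightarrow> m \<in> arr \<Longrightarrow> src l = rng m \<Longrightarrow> src (cmp l m) = src m"
  using K3 by blast
lemma comp_deg: "l \<in> arr \<Longrightarrow> m \<in> arr \<Longrightarrow> src l = rng m \<Longrightarrow> deg (cmp l m) = (\<lambda>i. deg l i + deg m i)"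
  using K3 by blast
lemma comp_rng_id[simp]: "l \<in> arr \<Longrightarrow> cmp (rng l) l = l"
  using K4 by blast
lemma comp_src_id[simp]: "l \<in> arr \<Longrightarrow> cmp l (src l) = l"
  using K4 by blast
lemma comp_assoc: "l \<in> arr \<Longrightarrow> m \<in> arr \<Longrightarrow> n \<in> arr \<Longrightarrow> src l = rng m \<Longrightarrow> src m = rng n \<Longrightarrow>
   cmp (cmp l m) n = cmp l (cmp m n)"
  using K5 by blast
lemma ufact: "l \<in> arr \<Longrightarrow> deg l = (\<lambda>i. m i + n i) \<Longrightarrow>
         (\<exists>!p. fst p \<in> arr \<and> snd p \<in> arr \<and>
               src (fst p) = rng (snd p) \<and>
               deg (fst p) = m \<and> deg (snd p) = n \<and>
               l = cmp (fst p) (snd p))"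
  using K6 by blast

lemma fact_unique:
  assumes "l \<in> arr" "m \<in> arr" "l' \<in> arr" "m' \<in> arr" "src l = rng m" "src l' = rng m'"
    "cmp l m = cmp l' m'" "deg l = deg l'"
  shows "l = l' \<and> m = m'"
proof -
  have d: "deg (cmp l m) = (\<lambda>i. deg l i + deg m i)" using assms(1,2,5) by (rule comp_deg)
  have d': "deg (cmp l' m') = (\<lambda>i. deg l' i + deg m' i)" using assms(3,4,6) by (rule comp_deg)
  have "deg m = deg m'"
  proof
    fix i show "deg m i = deg m' i" using fun_cong[OF d, of i] fun_cong[OF d', of i] assms(7,8) by simp
  qed
  have "cmp l m \<in> arr" using assms(1,2,5) by (rule comp_arr)
  have U: "\<exists>!p. fst p \<in> arr \<and> snd p \<in> arr \<and> src (fst p) = rng (snd p) \<and>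
               deg (fst p) = deg l \<and> deg (snd p) = deg m \<and> cmp l m = cmp (fst p) (snd p)"
    by (rule ufact[OF \<open>cmp l m \<in> arr\<close> d])
  have P1: "fst (l,m) \<in> arr \<and> snd (l,m) \<in> arr \<and> src (fst (l,m)) = rng (snd (l,m)) \<and>
               deg (fst (l,m)) = deg l \<and> deg (snd (l,m)) = deg m \<and> cmp l m = cmp (fst (l,m)) (snd (l,m))"
    using assms by simp
  have P2: "fst (l',m') \<in> arr \<and> snd (l',m') \<in> arr \<and> src (fst (l',m')) = rng (snd (l',m')) \<and>
               deg (fst (l',m')) = deg l \<and> deg (snd (l',m')) = deg m \<and> cmp l m = cmp (fst (l',m')) (snd (l',m'))"
    using assms \<open>deg m = deg m'\<close> by simp
  have "(l,m) = (l',m')"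
    using U P1 P2 by (metis (no_types, lifting) ex1E)
  then show ?thesis by simp
qed

lemma fact_exists:
  assumes "\<nu> \<in> arr" "\<And>i. n i \<le> deg \<nu> i"
  shows "\<exists>l m. l \<in> arr \<and> m \<in> arr \<and> src l = rng m \<and> deg l = n \<and> \<nu> = cmp l m"
proof -
  have "deg \<nu> = (\<lambda>i. n i + (deg \<nu> i - n i))" using assms(2) by (simp add: fun_eq_iff)
  from ufact[OF assms(1) this] obtain p where "fst p \<in> arr \<and> snd p \<in> arr \<and> src (fst p) = rng (snd p) \<and>
               deg (fst p) = n \<and> \<nu> = cmp (fst p) (snd p)" by blast
  then show ?thesis by blast
qed

end


definition kext :: "('a, 'k) kgraph \<Rightarrow> 'a \<Rightarrow> 'a \<Rightarrow> bool" where
  "kext G l \<nu> = (\<exists>\<mu>\<in>kg_arr G. kg_rng G \<mu> = kg_src G l \<and> \<nu> = kg_comp G l \<mu>)"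
definition krest :: "('a, 'k) kgraph \<Rightarrow> 'a \<Rightarrow> 'a \<Rightarrow> 'a" where
  "krest G l \<nu> = (THE \<mu>. \<mu> \<in> kg_arr G \<and> kg_rng G \<mu> = kg_src G l \<and> \<nu> = kg_comp G l \<mu>)"

definition gcond :: "('a, 'k) kgraph \<Rightarrow> 'a kpgen \<Rightarrow> 'a \<times> ('k \<Rightarrow> int) \<Rightarrow> bool" where
  "gcond G g p = (case g of Pg v \<Rightarrow> fst p \<in> kg_arr G \<and> kg_rng G (fst p) = v
     | Sg l \<Rightarrow> kext G l (fst p)
     | Tg l \<Rightarrow> fst p \<in> kg_arr G \<and> kg_rng G (fst p) = kg_src G l)"
definition gmap :: "('a, 'k) kgraph \<Rightarrow> 'a kpgen \<Rightarrow> 'a \<times> ('k \<Rightarrow> int) \<Rightarrow> 'a \<times> ('k \<Rightarrow> int)" where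
  "gmap G g p = (case g of Pg v \<Rightarrow> p
     | Sg l \<Rightarrow> (krest G l (fst p), \<lambda>i. snd p i - int (kg_deg G l i))
     | Tg l \<Rightarrow> (kg_comp G l (fst p), \<lambda>i. snd p i + int (kg_deg G l i)))"
definition gact :: "('a, 'k) kgraph \<Rightarrow> 'a kpgen \<Rightarrow> ('a \<times> ('k \<Rightarrow> int) \<Rightarrow> 'r::comm_ring_1) \<Rightarrow> 'a \<times> ('k \<Rightarrow> int) \<Rightarrow> 'r" where
  "gact G g f p = (if gcond G g p then f (gmap G g p) else 0)"

fun act :: "('a, 'k) kgraph \<Rightarrow> 'a kpgen list \<Rightarrow> ('a \<times> ('k \<Rightarrow> int) \<Rightarrow> 'r::comm_ring_1) \<Rightarrow> 'a \<times> ('k \<Rightarrow> int) \<Rightarrow> 'r" where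
  "act G [] f = f"
| "act G (g # w) f = gact G g (act G w f)"

definition phi :: "('a, 'k) kgraph \<Rightarrow> ('a kpgen list \<Rightarrow> 'r::comm_ring_1) \<Rightarrow> ('a \<times> ('k \<Rightarrow> int) \<Rightarrow> 'r) \<Rightarrow> 'a \<times> ('k \<Rightarrow> int) \<Rightarrow> 'r" where
  "phi G x f p = (\<Sum>w\<in>supp x. x w * act G w f p)"

definition EZ :: "('a, 'k) kgraph \<Rightarrow> ('a \<times> ('k \<Rightarrow> int) \<Rightarrow> 'r::comm_ring_1) \<Rightarrow> bool" where
  "EZ G f = (\<exists>N. \<forall>\<nu>\<in>kg_arr G. \<forall>z. (\<forall>i. N i \<le> kg_deg G \<nu> i) \<longrightarrow> f (\<nu>, z) = 0)"

lemma act_append: "act G (u @ v) f = act G u (act G v f)"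
  by (induction u) auto

lemma gact_sum: "gact G g (\<lambda>p. \<Sum>v\<in>V. h v p) p = (\<Sum>v\<in>V. gact G g (h v) p)"
  by (cases "gcond G g p") (simp_all add: gact_def)

lemma act_sum: "act G w (\<lambda>p. \<Sum>v\<in>V. h v p) = (\<lambda>p. \<Sum>v\<in>V. act G w (h v) p)"
proof (induction w)
  case (Cons g w)
  show ?case by (rule ext) (simp add: Cons gact_sum)
qed simp

lemma gact_scal: "gact G g (\<lambda>p. c * h p) p = c * gact G g h p"
  by (cases "gcond G g p") (simp_all add: gact_def)

lemma act_scal: "act G w (\<lambda>p. c * h p) = (\<lambda>p. c * act G w h p)"
proof (induction w)
  case (Cons g w)
  show ?case by (rule ext) (simp add: Cons gact_scal)
qed simp

lemma gact_diff: "gact G g (\<lambda>p. h p - k p) p = gact G g h p - gact G g k p"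
  by (cases "gcond G g p") (simp_all add: gact_def)

lemma act_diff: "act G w (\<lambda>p. h p - k p) = (\<lambda>p. act G w h p - act G w k p)"
proof (induction w)
  case (Cons g w)
  show ?case by (rule ext) (simp add: Cons gact_diff)
qed simp

lemma phi_superset: assumes "finite S" "supp x \<subseteq> S"
  shows "phi G x f p = (\<Sum>w\<in>S. x w * act G w f p)"
  unfolding phi_def
  by (rule sum.mono_neutral_left) (use assms in \<open>auto simp: supp_def\<close>)

lemma phi_add: assumes "x \<in> fa_carrier G" "y \<in> fa_carrier G"
  shows "phi G (\<lambda>w. x w + y w) f p = phi G x f p + phi G y f p"
proof -
  have f: "finite (supp x \<union> supp y)" using assms by (simp add: carrier_iff)
  have "phi G (\<lambda>w. x w + y w) f p = (\<Sum>w\<in>supp x \<union> supp y. (x w + y w) * act G w f p)"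
    by (rule phi_superset[OF f]) (auto simp: supp_def)
  also have "\<dots> = (\<Sum>w\<in>supp x \<union> supp y. x w * act G w f p) + (\<Sum>w\<in>supp x \<union> supp y. y w * act G w f p)"
    by (simp add: distrib_right sum.distrib)
  also have "\<dots> = phi G x f p + phi G y f p"
    using phi_superset[OF f, of x G f p] phi_superset[OF f, of y G f p] by auto
  finally show ?thesis .
qed

lemma phi_zero: "phi G (\<lambda>_. 0) f p = 0"
  by (simp add: phi_def supp_def)

lemma phi_mono: "phi G (fa_mono c w) f p = c * act G w f p"
proof -
  have "phi G (fa_mono c w) f p = (\<Sum>u\<in>{w}. fa_mono c w u * act G u f p)"
    by (rule phi_superset) (auto simp: supp_def fa_mono_def)
  then show ?thesis by (simp add: fa_mono_def)
qed

lemma phi_mult: assumes "x \<in> fa_carrier G" "y \<in> fa_carrier G"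
  shows "phi G (fa_mult x y) f p = phi G x (phi G y f) p"
proof -
  let ?S = "(\<lambda>q. fst q @ snd q) ` (supp x \<times> supp y)"
  have fx: "finite (supp x)" and fy: "finite (supp y)" using assms by (auto simp: carrier_iff)
  then have fS: "finite ?S" by simp
  have "phi G (fa_mult x y) f p = (\<Sum>w\<in>?S. fa_mult x y w * act G w f p)"
    by (rule phi_superset[OF fS fa_mult_supp])
  also have "\<dots> = (\<Sum>w\<in>?S. \<Sum>q\<in>splits w. x (fst q) * y (snd q) * act G w f p)"
    by (simp add: fa_mult_alt sum_distrib_right)
  also have "\<dots> = (\<Sum>P\<in>Sigma ?S splits. x (fst (snd P)) * y (snd (snd P)) * act G (fst P) f p)"
    by (simp add: sum.Sigma[OF fS] split_def)
  also have "\<dots> = (\<Sum>P\<in>(\<lambda>q. (fst q @ snd q, q)) ` (supp x \<times> supp y). x (fst (snd P)) * y (snd (snd P)) * act G (fst P) f p)"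
  proof (rule sum.mono_neutral_right)
    show "finite (Sigma ?S splits)" using fS by simp
    show "(\<lambda>q. (fst q @ snd q, q)) ` (supp x \<times> supp y) \<subseteq> Sigma ?S splits"
      by (auto simp: splits_def)
    show "\<forall>P\<in>Sigma ?S splits - (\<lambda>q. (fst q @ snd q, q)) ` (supp x \<times> supp y).
            x (fst (snd P)) * y (snd (snd P)) * act G (fst P) f p = 0"
    proof
      fix P assume P: "P \<in> Sigma ?S splits - (\<lambda>q. (fst q @ snd q, q)) ` (supp x \<times> supp y)"
      obtain w u v where Pe: "P = (w,(u,v))" by (cases P) auto
      with P have "u @ v = w" by (auto simp: splits_def)
      with P Pe have "(u,v) \<notin> supp x \<times> supp y" by (auto simp: image_iff)
      then have "x u = 0 \<or> y v = 0" by (auto simp: supp_def)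
      then show "x (fst (snd P)) * y (snd (snd P)) * act G (fst P) f p = 0" using Pe by auto
    qed
  qed
  also have "\<dots> = (\<Sum>q\<in>supp x \<times> supp y. x (fst q) * y (snd q) * act G (fst q @ snd q) f p)"
    by (subst sum.reindex) (auto simp: inj_on_def)
  also have "\<dots> = (\<Sum>u\<in>supp x. \<Sum>v\<in>supp y. x u * y v * act G (u @ v) f p)"
    by (simp add: sum.cartesian_product split_def)
  also have "\<dots> = phi G x (phi G y f) p"
    unfolding phi_def act_sum act_scal act_append
    by (simp add: sum_distrib_left mult.assoc)
  finally show ?thesis .
qed

lemma EZ_zero: "EZ G (\<lambda>_. 0)" by (auto simp: EZ_def)

lemma EZ_add: assumes "EZ G f" "EZ G g" shows "EZ G (\<lambda>p. f p + g p)"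
proof -
  obtain N1 where 1: "\<forall>\<nu>\<in>kg_arr G. \<forall>z. (\<forall>i. N1 i \<le> kg_deg G \<nu> i) \<longrightarrow> f (\<nu>, z) = 0" using assms by (auto simp: EZ_def)
  obtain N2 where 2: "\<forall>\<nu>\<in>kg_arr G. \<forall>z. (\<forall>i. N2 i \<le> kg_deg G \<nu> i) \<longrightarrow> g (\<nu>, z) = 0" using assms by (auto simp: EZ_def)
  show ?thesis unfolding EZ_def
    by (rule exI[of _ "\<lambda>i. max (N1 i) (N2 i)"]) (use 1 2 in auto)
qed

lemma EZ_scal: assumes "EZ G f" shows "EZ G (\<lambda>p. c * f p)"
  using assms unfolding EZ_def by (metis mult_zero_right)

lemma EZ_diff: assumes "EZ G f" "EZ G g" shows "EZ G (\<lambda>p. f p - g p)"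
  using EZ_add[OF assms(1) EZ_scal[OF assms(2), of "-1"]] by simp

lemma EZ_sum: assumes "finite V" "\<And>v. v \<in> V \<Longrightarrow> EZ G (h v)" shows "EZ G (\<lambda>p. \<Sum>v\<in>V. h v p)"
  using assms by (induction V rule: finite_induct) (auto intro: EZ_zero EZ_add)

lemma EZ_cong: "EZ G f \<Longrightarrow> (\<And>p. f p = g p) \<Longrightarrow> EZ G g"
proof -
  assume "EZ G f" "\<And>p. f p = g p"
  then have "f = g" by auto
  then show ?thesis using \<open>EZ G f\<close> by simp
qed

context kg begin

lemma krest_eq: assumes "l \<in> arr" "\<mu> \<in> arr" "rng \<mu> = src l"
  shows "krest G l (cmp l \<mu>) = \<mu>"
  unfolding krest_def
proof (rule the_equality)
  show "\<mu> \<in> arr \<and> rng \<mu> = src l \<and> cmp l \<mu> = cmp l \<mu>" using assms by simp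
  fix \<mu>' assume H: "\<mu>' \<in> arr \<and> rng \<mu>' = src l \<and> cmp l \<mu> = cmp l \<mu>'"
  have "l = l \<and> \<mu> = \<mu>'"
    by (rule fact_unique) (use H assms in simp_all)
  then show "\<mu>' = \<mu>" by simp
qed

lemma EZ_gact: assumes "valid_gen G g" "EZ G f" shows "EZ G (gact G g f)"
proof -
  obtain N where N: "\<forall>\<nu>\<in>arr. \<forall>z. (\<forall>i. N i \<le> deg \<nu> i) \<longrightarrow> f (\<nu>, z) = 0" using assms by (auto simp: EZ_def)
  show ?thesis
  proof (cases g)
    case (Pg v)
    show ?thesis unfolding EZ_def
      by (rule exI[of _ N]) (use N in \<open>auto simp: Pg gact_def gcond_def gmap_def\<close>)
  next
    case (Sg l)
    then have l: "l \<in> arr" using assms by (simp add: valid_gen_def)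
    show ?thesis unfolding EZ_def
    proof (rule exI[of _ "\<lambda>i. N i + deg l i"], intro ballI allI impI)
      fix \<nu> z assume "\<nu> \<in> arr" and le: "\<forall>i. N i + deg l i \<le> deg \<nu> i"
      show "gact G g f (\<nu>, z) = 0"
      proof (cases "kext G l \<nu>")
        case True
        then obtain \<mu> where \<mu>: "\<mu> \<in> arr" "rng \<mu> = src l" "\<nu> = cmp l \<mu>" by (auto simp: kext_def)
        have "deg \<nu> = (\<lambda>i. deg l i + deg \<mu> i)" using \<mu> l comp_deg by simp
        then have "\<forall>i. N i \<le> deg \<mu> i" using le by (metis add.commute add_le_cancel_right)
        then show ?thesis using N \<mu> l krest_eq by (simp add: Sg gact_def gcond_def gmap_def)
      qed (simp add: Sg gact_def gcond_def)
    qed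
  next
    case (Tg l)
    then have l: "l \<in> arr" using assms by (simp add: valid_gen_def)
    show ?thesis unfolding EZ_def
    proof (rule exI[of _ N], intro ballI allI impI)
      fix \<nu> z assume "\<nu> \<in> arr" and le: "\<forall>i. N i \<le> deg \<nu> i"
      show "gact G g f (\<nu>, z) = 0"
      proof (cases "rng \<nu> = src l")
        case True
        have "deg (cmp l \<nu>) = (\<lambda>i. deg l i + deg \<nu> i)" using True l \<open>\<nu> \<in> arr\<close> comp_deg by simp
        then have "\<forall>i. N i \<le> deg (cmp l \<nu>) i" using le by (simp add: le_add2 trans_le_add2)
        moreover have "cmp l \<nu> \<in> arr" using True l \<open>\<nu> \<in> arr\<close> comp_arr by simp
        ultimately show ?thesis using N True \<open>\<nu> \<in> arr\<close> by (simp add: Tg gact_def gcond_def gmap_def)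
      qed (simp add: Tg gact_def gcond_def)
    qed
  qed
qed

lemma EZ_act: "set w \<subseteq> Collect (valid_gen G) \<Longrightarrow> EZ G f \<Longrightarrow> EZ G (act G w f)"
  by (induction w) (auto intro: EZ_gact)

lemma EZ_phi: assumes "x \<in> fa_carrier G" "EZ G f" shows "EZ G (phi G x f)"
proof -
  have "EZ G (\<lambda>p. \<Sum>w\<in>supp x. x w * act G w f p)"
    using assms by (intro EZ_sum EZ_scal EZ_act) (auto simp: carrier_iff)
  then show ?thesis by (simp add: phi_def[abs_def])
qed

end


definition JJ :: "('a, 'k) kgraph \<Rightarrow> ('a kpgen list \<Rightarrow> 'r::comm_ring_1) set" where
  "JJ G = {x \<in> fa_carrier G. \<forall>f. EZ G (phi G x f)}"

lemma diff_closed: assumes "x \<in> fa_carrier G" "y \<in> fa_carrier G" shows "(\<lambda>w. x w - y w) \<in> fa_carrier G"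
proof -
  have "supp (\<lambda>w. x w - y w) \<subseteq> supp x \<union> supp y" by (auto simp: supp_def)
  then show ?thesis using assms unfolding carrier_iff by (meson Un_iff finite_Un rev_finite_subset subsetD)
qed

lemma sum_closed: assumes "finite L" "\<And>l. l \<in> L \<Longrightarrow> x l \<in> fa_carrier G"
  shows "(\<lambda>w. \<Sum>l\<in>L. x l w) \<in> fa_carrier G"
  using assms
proof (induction L rule: finite_induct)
  case empty then show ?case using zero_carrier by simp
next
  case (insert a F)
  then show ?case using add_closed[of "x a" G "\<lambda>w. \<Sum>l\<in>F. x l w"] by simp
qed

lemma phi_diff: assumes "x \<in> fa_carrier G" "y \<in> fa_carrier G"
  shows "phi G (\<lambda>w. x w - y w) f p = phi G x f p - phi G y f p"
proof -
  have f: "finite (supp x \<union> supp y)" using assms by (simp add: carrier_iff)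
  have "phi G (\<lambda>w. x w - y w) f p = (\<Sum>w\<in>supp x \<union> supp y. (x w - y w) * act G w f p)"
    by (rule phi_superset[OF f]) (auto simp: supp_def)
  also have "\<dots> = (\<Sum>w\<in>supp x \<union> supp y. x w * act G w f p) - (\<Sum>w\<in>supp x \<union> supp y. y w * act G w f p)"
    by (simp add: left_diff_distrib sum_subtractf)
  also have "\<dots> = phi G x f p - phi G y f p"
    using phi_superset[OF f, of x G f p] phi_superset[OF f, of y G f p] by auto
  finally show ?thesis .
qed

lemma phi_sum: assumes "finite L" "\<And>l. l \<in> L \<Longrightarrow> x l \<in> fa_carrier G"
  shows "phi G (\<lambda>w. \<Sum>l\<in>L. x l w) f p = (\<Sum>l\<in>L. phi G (x l) f p)"
  using assms
proof (induction L rule: finite_induct)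
  case empty then show ?case using phi_zero by simp
next
  case (insert a F)
  have "phi G (\<lambda>w. \<Sum>l\<in>insert a F. x l w) f p = phi G (\<lambda>w. x a w + (\<Sum>l\<in>F. x l w)) f p"
    using insert by simp
  also have "\<dots> = phi G (x a) f p + phi G (\<lambda>w. \<Sum>l\<in>F. x l w) f p"
    by (rule phi_add) (use insert in \<open>auto intro!: sum_closed\<close>)
  finally show ?case using insert by simp
qed

lemma phi_mult_fun: "x \<in> fa_carrier G \<Longrightarrow> y \<in> fa_carrier G \<Longrightarrow> phi G (fa_mult x y) f = phi G x (phi G y f)"
  by (rule ext) (rule phi_mult)

lemma phi_add_fun: "x \<in> fa_carrier G \<Longrightarrow> y \<in> fa_carrier G \<Longrightarrow> phi G (\<lambda>w. x w + y w) f = (\<lambda>p. phi G x f p + phi G y f p)"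
  by (rule ext) (rule phi_add)

lemma EZ_phi_zero: "EZ G (phi G (\<lambda>_. 0) f)"
proof -
  have "phi G (\<lambda>_. 0) f = (\<lambda>_. 0)" by (rule ext, rule phi_zero)
  then show ?thesis by (simp add: EZ_zero)
qed

context kg begin

lemma JJ_ideal: "ideal (JJ G :: ('a kpgen list \<Rightarrow> 'r::comm_ring_1) set) (free_alg G)"
proof -
  interpret R: ring "free_alg G" by (rule free_alg_ring)
  show ?thesis
  proof (rule idealI[OF free_alg_ring])
    show "subgroup (JJ G :: ('a kpgen list \<Rightarrow> 'r) set) (add_monoid (free_alg G))"
    proof (rule R.add.subgroupI)
      show "(JJ G :: ('a kpgen list \<Rightarrow> 'r) set) \<subseteq> carrier (free_alg G)" by (auto simp: JJ_def free_alg_def)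
      have "(\<lambda>_. 0) \<in> JJ G" by (simp add: JJ_def zero_carrier EZ_phi_zero)
      then show "(JJ G :: ('a kpgen list \<Rightarrow> 'r) set) \<noteq> {}" by auto
    next
      fix a :: "'a kpgen list \<Rightarrow> 'r" assume a: "a \<in> JJ G"
      then have ac: "a \<in> carrier (free_alg G)" by (simp add: JJ_def free_alg_def)
      let ?b = "\<ominus>\<^bsub>free_alg G\<^esub> a"
      have b: "?b = \<ominus>\<^bsub>free_alg G\<^esub> a" by simp
      have bc: "?b \<in> carrier (free_alg G)" using b ac by simp
      have "a \<oplus>\<^bsub>free_alg G\<^esub> ?b = \<zero>\<^bsub>free_alg G\<^esub>" using ac by (rule R.r_neg)
      then have e: "(\<lambda>w. a w + ?b w) = (\<lambda>_. 0)" by (simp add: free_alg_def)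
      have "phi G ?b f p = - phi G a f p" for f p
      proof -
        have "phi G (\<lambda>w. a w + ?b w) f p = phi G a f p + phi G ?b f p"
          by (rule phi_add) (use ac bc in \<open>auto simp: free_alg_def\<close>)
        then show ?thesis using e phi_zero by (metis add_eq_0_iff)
      qed
      then have "?b \<in> JJ G" using a bc
        by (auto simp: JJ_def free_alg_def intro: EZ_cong[OF EZ_scal[of G _ "-1"]])
      then show "?b \<in> JJ G" .
    next
      fix a b :: "'a kpgen list \<Rightarrow> 'r" assume "a \<in> JJ G" "b \<in> JJ G"
      then show "a \<oplus>\<^bsub>free_alg G\<^esub> b \<in> JJ G"
        by (auto simp: JJ_def free_alg_def phi_add_fun add_closed intro: EZ_add)
    qed
  next
    fix a x :: "'a kpgen list \<Rightarrow> 'r" assume "a \<in> JJ G" "x \<in> carrier (free_alg G)"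
    then show "x \<otimes>\<^bsub>free_alg G\<^esub> a \<in> JJ G"
      by (auto simp: JJ_def free_alg_def phi_mult_fun mult_closed EZ_phi)
  next
    fix a x :: "'a kpgen list \<Rightarrow> 'r" assume "a \<in> JJ G" "x \<in> carrier (free_alg G)"
    then show "a \<otimes>\<^bsub>free_alg G\<^esub> x \<in> JJ G"
      by (auto simp: JJ_def free_alg_def phi_mult_fun mult_closed)
  qed
qed

lemma vertexI: "l \<in> arr \<Longrightarrow> deg l = (\<lambda>_. 0) \<Longrightarrow> l \<in> kg_vertices G"
  by (simp add: kg_vertices_def)

lemma sw_valid: "l \<in> arr \<Longrightarrow> set (sw G l) \<subseteq> Collect (valid_gen G)"
  by (auto simp: sw_def valid_gen_def vertexI)
lemma swstar_valid: "l \<in> arr \<Longrightarrow> set (swstar G l) \<subseteq> Collect (valid_gen G)"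
  by (auto simp: swstar_def valid_gen_def vertexI)

lemma act_sw: assumes l: "l \<in> arr"
  shows "act G (sw G l) f (\<nu>, z) = (if kext G l \<nu> then f (krest G l \<nu>, \<lambda>i. z i - int (deg l i)) else 0)"
proof (cases "deg l = (\<lambda>_. 0)")
  case True
  then have v: "l \<in> kg_vertices G" using l vertexI by simp
  have e: "kext G l \<nu> \<longleftrightarrow> \<nu> \<in> arr \<and> rng \<nu> = l"
  proof
    assume "kext G l \<nu>"
    then obtain \<mu> where "\<mu> \<in> arr" "rng \<mu> = src l" "\<nu> = cmp l \<mu>" by (auto simp: kext_def)
    then show "\<nu> \<in> arr \<and> rng \<nu> = l" using v vert_src by (metis comp_rng_id)
  next
    assume "\<nu> \<in> arr \<and> rng \<nu> = l"
    then show "kext G l \<nu>" unfolding kext_def using v vert_src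
      by (intro bexI[of _ \<nu>]) (metis comp_rng_id)+
  qed
  have r: "\<nu> \<in> arr \<Longrightarrow> rng \<nu> = l \<Longrightarrow> krest G l \<nu> = \<nu>"
    using krest_eq[OF l, of \<nu>] v vert_src by (metis comp_rng_id)
  show ?thesis using True e r by (auto simp: sw_def gact_def gcond_def gmap_def)
next
  case False
  then show ?thesis by (simp add: sw_def gact_def gcond_def gmap_def)
qed

lemma act_swstar: assumes l: "l \<in> arr"
  shows "act G (swstar G l) f (\<nu>, z) = (if \<nu> \<in> arr \<and> rng \<nu> = src l then f (cmp l \<nu>, \<lambda>i. z i + int (deg l i)) else 0)"
proof (cases "deg l = (\<lambda>_. 0)")
  case True
  then have v: "l \<in> kg_vertices G" using l vertexI by simp
  show ?thesis using True v vert_src by (auto simp: swstar_def gact_def gcond_def gmap_def)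
next
  case False
  then show ?thesis by (simp add: swstar_def gact_def gcond_def gmap_def)
qed

end


lemma mono_diff_JJ:
  assumes "set u \<subseteq> Collect (valid_gen G)" "set v \<subseteq> Collect (valid_gen G)"
    "\<And>f. EZ G (\<lambda>p. act G u f p - d * act G v f p)"
  shows "(\<lambda>w. fa_mono 1 u w - fa_mono d v w) \<in> JJ G"
proof -
  have c: "fa_mono 1 u \<in> fa_carrier G" "fa_mono d v \<in> fa_carrier G" by (simp_all add: mono_carrier assms(1,2))
  have "phi G (\<lambda>w. fa_mono 1 u w - fa_mono d v w) f = (\<lambda>p. act G u f p - d * act G v f p)" for f
    by (rule ext) (simp add: phi_diff[OF c] phi_mono)
  then show ?thesis using c assms(3) diff_closed[OF c] by (simp add: JJ_def)
qed

context kg begin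

lemma kext_comp: assumes "l \<in> arr" "m \<in> arr" "src l = rng m"
  shows "kext G (cmp l m) \<nu> \<longleftrightarrow> kext G l \<nu> \<and> kext G m (krest G l \<nu>)"
proof
  assume "kext G (cmp l m) \<nu>"
  then obtain \<rho> where r: "\<rho> \<in> arr" "rng \<rho> = src (cmp l m)" "\<nu> = cmp (cmp l m) \<rho>" by (auto simp: kext_def)
  have r2: "rng \<rho> = src m" using r assms by simp
  have e: "\<nu> = cmp l (cmp m \<rho>)" using r r2 assms comp_assoc by simp
  have a: "cmp m \<rho> \<in> arr" "rng (cmp m \<rho>) = src l" using assms r r2 comp_arr by auto
  have "krest G l \<nu> = cmp m \<rho>" using e krest_eq[OF assms(1) a] by simp
  then show "kext G l \<nu> \<and> kext G m (krest G l \<nu>)" using e a r r2 unfolding kext_def by auto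
next
  assume "kext G l \<nu> \<and> kext G m (krest G l \<nu>)"
  then obtain \<mu> where m: "\<mu> \<in> arr" "rng \<mu> = src l" "\<nu> = cmp l \<mu>" and k: "kext G m (krest G l \<nu>)"
    by (auto simp: kext_def)
  have "krest G l \<nu> = \<mu>" using m krest_eq assms by simp
  then obtain \<rho> where r: "\<rho> \<in> arr" "rng \<rho> = src m" "\<mu> = cmp m \<rho>" using k by (auto simp: kext_def)
  have "\<nu> = cmp (cmp l m) \<rho>" using m r assms comp_assoc by simp
  then show "kext G (cmp l m) \<nu>" unfolding kext_def using r assms by (intro bexI[of _ \<rho>]) auto
qed

lemma krest_comp: assumes "l \<in> arr" "m \<in> arr" "src l = rng m" "kext G (cmp l m) \<nu>"
  shows "krest G (cmp l m) \<nu> = krest G m (krest G l \<nu>)"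
proof -
  obtain \<rho> where r: "\<rho> \<in> arr" "rng \<rho> = src (cmp l m)" "\<nu> = cmp (cmp l m) \<rho>" using assms(4) by (auto simp: kext_def)
  have r2: "rng \<rho> = src m" using r assms by simp
  have e: "\<nu> = cmp l (cmp m \<rho>)" using r r2 assms comp_assoc by simp
  have a: "cmp m \<rho> \<in> arr" "rng (cmp m \<rho>) = src l" using assms r r2 comp_arr by auto
  have "krest G l \<nu> = cmp m \<rho>" using e krest_eq[OF assms(1) a] by simp
  moreover have "krest G m (cmp m \<rho>) = \<rho>" using krest_eq assms r r2 by simp
  moreover have "krest G (cmp l m) \<nu> = \<rho>" using krest_eq[of "cmp l m" \<rho>] r assms comp_arr by simp
  ultimately show ?thesis by simp
qed

lemma kext_krest: "kext G l \<nu> \<Longrightarrow> l \<in> arr \<Longrightarrow> krest G l \<nu> \<in> arr \<and> rng (krest G l \<nu>) = src l \<and> \<nu> = cmp l (krest G l \<nu>)"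
  unfolding kext_def using krest_eq by auto

lemma R2: assumes "l \<in> arr" "m \<in> arr" "src l = rng m"
  shows "act G (sw G l @ sw G m) f p = act G (sw G (cmp l m)) f p"
proof -
  obtain \<nu> z where p: "p = (\<nu>, z)" by (cases p)
  have lm: "cmp l m \<in> arr" using assms comp_arr by simp
  have d: "deg (cmp l m) = (\<lambda>i. deg l i + deg m i)" using assms comp_deg by simp
  show ?thesis
    unfolding p act_append act_sw[OF assms(1)] act_sw[OF assms(2)] act_sw[OF lm] kext_comp[OF assms]
    using krest_comp[OF assms] kext_comp[OF assms] by (auto simp: d algebra_simps)
qed

lemma R3: assumes "l \<in> arr" "m \<in> arr" "src l = rng m"
  shows "act G (swstar G m @ swstar G l) f p = act G (swstar G (cmp l m)) f p"
proof -
  obtain \<nu> z where p: "p = (\<nu>, z)" by (cases p)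
  have lm: "cmp l m \<in> arr" using assms comp_arr by simp
  have d: "deg (cmp l m) = (\<lambda>i. deg l i + deg m i)" using assms comp_deg by simp
  show ?thesis
    unfolding p act_append act_swstar[OF assms(1)] act_swstar[OF assms(2)] act_swstar[OF lm]
    using assms comp_arr comp_assoc by (auto simp: d algebra_simps)
qed

lemma R4: assumes "l \<in> arr" "m \<in> arr" "deg l = deg m"
  shows "act G (swstar G l @ sw G m) f p = (if l = m then 1 else 0) * act G [Pg (src l)] f p"
proof -
  obtain \<mu> z where p: "p = (\<mu>, z)" by (cases p)
  have "kext G m (cmp l \<mu>) \<longleftrightarrow> l = m" if "\<mu> \<in> arr" "rng \<mu> = src l"
  proof
    assume "kext G m (cmp l \<mu>)"
    then obtain \<rho> where "\<rho> \<in> arr" "rng \<rho> = src m" "cmp l \<mu> = cmp m \<rho>" by (auto simp: kext_def)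
    then show "l = m" using fact_unique[of l \<mu> m \<rho>] assms that by simp
  qed (use that in \<open>auto simp: kext_def\<close>)
  moreover have "krest G l (cmp l \<mu>) = \<mu>" if "\<mu> \<in> arr" "rng \<mu> = src l"
    using krest_eq assms that by simp
  ultimately show ?thesis
    unfolding p act_append act_swstar[OF assms(1)] act_sw[OF assms(2)]
    using assms by (auto simp: gact_def gcond_def gmap_def)
qed

lemma R5: assumes v: "v \<in> kg_vertices G" and fin: "finite L" and L: "L = {l \<in> arr. rng l = v \<and> deg l = n}"
  shows "EZ G (\<lambda>p. act G [Pg v] f p - (\<Sum>l\<in>L. act G (sw G l @ swstar G l) f p))"
  unfolding EZ_def
proof (rule exI[of _ n], intro ballI allI impI)
  fix \<nu> z assume \<nu>: "\<nu> \<in> arr" and le: "\<forall>i. n i \<le> deg \<nu> i"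
  obtain l0 \<rho> where f: "l0 \<in> arr" "\<rho> \<in> arr" "src l0 = rng \<rho>" "deg l0 = n" "\<nu> = cmp l0 \<rho>"
    using fact_exists[OF \<nu>] le by blast
  have t: "act G (sw G l @ swstar G l) f (\<nu>, z) = (if l = l0 then f (\<nu>, z) else 0)" if "l \<in> L" for l
  proof -
    have l: "l \<in> arr" "deg l = n" using that L by auto
    have k: "kext G l \<nu> \<longleftrightarrow> l = l0"
    proof
      assume "kext G l \<nu>"
      then obtain \<mu> where mu: "\<mu> \<in> arr" "rng \<mu> = src l" "\<nu> = cmp l \<mu>" by (auto simp: kext_def)
      have eq: "cmp l \<mu> = cmp l0 \<rho>" using mu(3) f(5) by (rule trans[OF sym])
      have "l = l0 \<and> \<mu> = \<rho>"
        by (rule fact_unique[OF l(1) mu(1) f(1) f(2) mu(2)[symmetric] f(3) eq]) (simp add: l(2) f(4))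
      then show "l = l0" by simp
    next
      assume l0: "l = l0"
      show "kext G l \<nu>" unfolding kext_def l0 using f(2,3,5) by (intro bexI[of _ \<rho>] conjI) simp_all
    qed
    show ?thesis
      unfolding act_append act_sw[OF l(1)] act_swstar[OF l(1)]
      using k kext_krest[of l \<nu>] l by auto
  qed
  have "(\<Sum>l\<in>L. act G (sw G l @ swstar G l) f (\<nu>, z)) = (\<Sum>l\<in>L. if l = l0 then f (\<nu>, z) else 0)"
    using t by (rule sum.cong[OF refl])
  also have "\<dots> = (if l0 \<in> L then f (\<nu>, z) else 0)" using fin by (simp add: sum.delta')
  also have "\<dots> = (if rng \<nu> = v then f (\<nu>, z) else 0)"
  proof -
    have "rng \<nu> = rng l0" using f(1-3,5) comp_rng by blast
    then have "l0 \<in> L \<longleftrightarrow> rng \<nu> = v" using f(1,4) L by simp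
    then show ?thesis by simp
  qed
  finally show "act G [Pg v] f (\<nu>, z) - (\<Sum>l\<in>L. act G (sw G l @ swstar G l) f (\<nu>, z)) = 0"
    using \<nu> by (simp add: gact_def gcond_def gmap_def)
qed

end


lemma EZ_allzero: "(\<And>p. f p = 0) \<Longrightarrow> EZ G f"
  by (rule EZ_cong[OF EZ_zero]) simp

lemma mono_if: "(\<lambda>u. fa_mono 1 a u - (if c then fa_mono 1 b u else 0)) = (\<lambda>u. fa_mono 1 a u - fa_mono (if c then 1 else 0) b u)"
  by (auto simp: fa_mono_def)

lemma mono_one: "(\<lambda>u. fa_mono 1 a u - fa_mono 1 b u) = (\<lambda>u. fa_mono 1 a u - fa_mono 1 b u)" ..

context kg begin

lemma rels_sub: assumes rf: "row_finite G" shows "kp_rels G \<subseteq> JJ G"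
proof
  fix x assume "x \<in> kp_rels G"
  then consider
    (a) v w where "x = (\<lambda>u. fa_mono 1 [Pg v, Pg w] u - (if v = w then fa_mono 1 [Pg v] u else 0))"
        "v \<in> kg_vertices G" "w \<in> kg_vertices G"
  | (b) l m where "x = (\<lambda>u. fa_mono 1 (sw G l @ sw G m) u - fa_mono 1 (sw G (cmp l m)) u)"
        "l \<in> arr" "m \<in> arr" "src l = rng m"
  | (c) l m where "x = (\<lambda>u. fa_mono 1 (swstar G m @ swstar G l) u - fa_mono 1 (swstar G (cmp l m)) u)"
        "l \<in> arr" "m \<in> arr" "src l = rng m"
  | (d) l m where "x = (\<lambda>u. fa_mono 1 (swstar G l @ sw G m) u - (if l = m then fa_mono 1 [Pg (src l)] u else 0))"
        "l \<in> arr" "m \<in> arr" "deg l = deg m" "deg l \<noteq> (\<lambda>_. 0)"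
  | (e) v n where "x = (\<lambda>u. fa_mono 1 [Pg v] u - (\<Sum>l\<in>{l \<in> arr. rng l = v \<and> deg l = n}.
                                     fa_mono 1 (sw G l @ swstar G l) u))"
        "v \<in> kg_vertices G" "n \<noteq> (\<lambda>_. 0)"
    unfolding kp_rels_def by blast
  then show "x \<in> JJ G"
  proof cases
    case a
    show ?thesis unfolding a(1) mono_if
    proof (rule mono_diff_JJ)
      show "set [Pg v, Pg w] \<subseteq> Collect (valid_gen G)" "set [Pg v] \<subseteq> Collect (valid_gen G)"
        using a by (auto simp: valid_gen_def)
      show "EZ G (\<lambda>p. act G [Pg v, Pg w] f p - (if v = w then 1 else 0) * act G [Pg v] f p)" for f
        by (rule EZ_allzero) (auto simp: gact_def gcond_def gmap_def)
    qed
  next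
    case b
    have lm: "cmp l m \<in> arr" using b comp_arr by simp
    show ?thesis unfolding b(1)
    proof (rule mono_diff_JJ[where d=1, simplified])
      show "set (sw G l @ sw G m) \<subseteq> Collect (valid_gen G)" using b sw_valid by simp
      show "set (sw G (cmp l m)) \<subseteq> Collect (valid_gen G)" using lm sw_valid by simp
      show "EZ G (\<lambda>p. act G (sw G l @ sw G m) f p - act G (sw G (cmp l m)) f p)" for f
        by (rule EZ_allzero) (simp add: R2 b)
    qed
  next
    case c
    have lm: "cmp l m \<in> arr" using c comp_arr by simp
    show ?thesis unfolding c(1)
    proof (rule mono_diff_JJ[where d=1, simplified])
      show "set (swstar G m @ swstar G l) \<subseteq> Collect (valid_gen G)" using c swstar_valid by simp
      show "set (swstar G (cmp l m)) \<subseteq> Collect (valid_gen G)" using lm swstar_valid by simp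
      show "EZ G (\<lambda>p. act G (swstar G m @ swstar G l) f p - act G (swstar G (cmp l m)) f p)" for f
        by (rule EZ_allzero) (simp add: R3 c)
    qed
  next
    case d
    show ?thesis unfolding d(1) mono_if
    proof (rule mono_diff_JJ)
      show "set (swstar G l @ sw G m) \<subseteq> Collect (valid_gen G)" using d swstar_valid sw_valid by simp
      show "set [Pg (src l)] \<subseteq> Collect (valid_gen G)" using d src_vert by (simp add: valid_gen_def)
      show "EZ G (\<lambda>p. act G (swstar G l @ sw G m) f p - (if l = m then 1 else 0) * act G [Pg (src l)] f p)" for f
        by (rule EZ_allzero) (simp add: R4 d)
    qed
  next
    case e
    let ?L = "{l \<in> arr. rng l = v \<and> deg l = n}"
    have fin: "finite ?L" using rf e unfolding row_finite_def by blast
    have c1: "fa_mono 1 [Pg v] \<in> fa_carrier G" using e by (intro mono_carrier) (simp add: valid_gen_def)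
    have c2: "fa_mono 1 (sw G l @ swstar G l) \<in> fa_carrier G" if "l \<in> ?L" for l
      using that sw_valid swstar_valid by (intro mono_carrier) simp
    have c3: "(\<lambda>u. \<Sum>l\<in>?L. fa_mono 1 (sw G l @ swstar G l) u) \<in> fa_carrier G"
      using fin c2 by (rule sum_closed)
    have pe: "phi G x f = (\<lambda>p. act G [Pg v] f p - (\<Sum>l\<in>?L. act G (sw G l @ swstar G l) f p))" for f
    proof
      fix p
      show "phi G x f p = act G [Pg v] f p - (\<Sum>l\<in>?L. act G (sw G l @ swstar G l) f p)"
        unfolding e(1) phi_diff[OF c1 c3] using phi_sum[OF fin c2, where f=f and p=p] by (simp add: phi_mono)
    qed
    have xc: "x \<in> fa_carrier G" unfolding e(1) using diff_closed[OF c1 c3] .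
    show ?thesis unfolding JJ_def
    proof (intro CollectI conjI allI xc)
      fix f show "EZ G (phi G x f)" unfolding pe by (rule R5[OF e(2) fin refl])
    qed
  qed
qed

lemma ideal_sub: assumes "row_finite G" shows "kp_ideal G \<subseteq> JJ G"
proof -
  interpret R: ring "free_alg G" by (rule free_alg_ring)
  show ?thesis unfolding kp_ideal_def by (rule R.genideal_minimal[OF JJ_ideal rels_sub[OF assms]])
qed

end

lemma phi_mono_fun: "phi G (fa_mono c w) f = (\<lambda>p. c * act G w f p)"
  by (rule ext) (rule phi_mono)

context kg begin

lemma rels_carrier: "row_finite G \<Longrightarrow> kp_rels G \<subseteq> carrier (free_alg G)"
  using rels_sub by (auto simp: JJ_def free_alg_def)

lemma kp_ideal_ideal: "row_finite G \<Longrightarrow> ideal (kp_ideal G) (free_alg G)"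
proof -
  assume rf: "row_finite G"
  interpret R: ring "free_alg G" by (rule free_alg_ring)
  show ?thesis unfolding kp_ideal_def by (rule R.genideal_ideal[OF rels_carrier[OF rf]])
qed

lemma class_hom: "row_finite G \<Longrightarrow> kp_class G \<in> ring_hom (free_alg G) (KP G)"
proof -
  assume rf: "row_finite G"
  interpret I: ideal "kp_ideal G" "free_alg G" by (rule kp_ideal_ideal[OF rf])
  have e: "kp_class G = (+>\<^bsub>free_alg G\<^esub>) (kp_ideal G)" by (rule ext) (simp add: kp_class_def)
  show ?thesis unfolding KP_def e by (rule I.rcos_ring_hom)
qed

lemma central_EZ:
  assumes rf: "row_finite G" and a0: "a0 \<in> fa_carrier G" and cen: "kp_class G a0 \<in> kp_center G"
    and u: "set u \<subseteq> Collect (valid_gen G)"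
  shows "EZ G (\<lambda>p. phi G a0 (act G u f) p - act G u (phi G a0 f) p)"
proof -
  interpret R: ring "free_alg G" by (rule free_alg_ring)
  interpret I: ideal "kp_ideal G" "free_alg G" by (rule kp_ideal_ideal[OF rf])
  interpret h: ring_hom_ring "free_alg G" "KP G" "kp_class G"
    by (rule ring_hom_ringI2[OF free_alg_ring _ class_hom[OF rf]]) (simp add: KP_def I.quotient_is_ring)
  let ?y = "fa_mono 1 u"
  have yc: "?y \<in> carrier (free_alg G)" using u by (simp add: free_alg_def mono_carrier)
  have ac: "a0 \<in> carrier (free_alg G)" using a0 by (simp add: free_alg_def)
  have "kp_class G ?y \<in> carrier (KP G)" using yc by (rule h.hom_closed)
  then have "kp_class G a0 \<otimes>\<^bsub>KP G\<^esub> kp_class G ?y = kp_class G ?y \<otimes>\<^bsub>KP G\<^esub> kp_class G a0"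
    using cen unfolding kp_center_def by blast
  then have e: "kp_class G (a0 \<otimes>\<^bsub>free_alg G\<^esub> ?y) = kp_class G (?y \<otimes>\<^bsub>free_alg G\<^esub> a0)"
    by (simp only: h.hom_mult[OF ac yc] h.hom_mult[OF yc ac])
  let ?x1 = "a0 \<otimes>\<^bsub>free_alg G\<^esub> ?y" and ?x2 = "?y \<otimes>\<^bsub>free_alg G\<^esub> a0"
  have x1: "?x1 \<in> carrier (free_alg G)" and x2: "?x2 \<in> carrier (free_alg G)" using ac yc by auto
  have "?x1 \<in> kp_ideal G +>\<^bsub>free_alg G\<^esub> ?x2"
    using e x1 by (intro I.a_repr_independenceD) (simp_all add: kp_class_def)
  then have "?x1 \<ominus>\<^bsub>free_alg G\<^esub> ?x2 \<in> kp_ideal G"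
    using I.a_rcos_module_minus[OF free_alg_ring x2 x1] by simp
  then have dJ: "?x1 \<ominus>\<^bsub>free_alg G\<^esub> ?x2 \<in> JJ G" using ideal_sub[OF rf] by blast
  let ?d = "?x1 \<ominus>\<^bsub>free_alg G\<^esub> ?x2"
  have dc: "?d \<in> carrier (free_alg G)" using x1 x2 by simp
  have "?d \<oplus>\<^bsub>free_alg G\<^esub> ?x2 = ?x1" using x1 x2 by (simp add: a_minus_def R.a_assoc R.l_neg)
  then have "(\<lambda>w. ?d w + ?x2 w) = ?x1" by (simp add: free_alg_def)
  then have pe: "phi G ?x1 f p = phi G ?d f p + phi G ?x2 f p" for p
    using phi_add[of ?d G ?x2 f p] dc x2 by (simp add: free_alg_def)
  have m1: "phi G (fa_mono 1 u) g = act G u g" for g by (simp add: phi_mono_fun)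
  have p1: "phi G ?x1 f p = phi G a0 (act G u f) p" for p
    using ac yc phi_mult[of a0 G ?y f p] by (simp add: free_alg_def m1)
  have p2: "phi G ?x2 f p = act G u (phi G a0 f) p" for p
    using ac yc phi_mult[of ?y G a0 f p] by (simp add: free_alg_def m1)
  have "EZ G (phi G ?d f)" using dJ by (simp add: JJ_def)
  then show ?thesis
    by (rule EZ_cong) (use pe p1 p2 in \<open>simp add: algebra_simps\<close>)
qed

end

locale kgF = kg G for G :: "('a, 'k::finite) kgraph" +
  fixes F :: "('a \<times> 'a) set" and c :: "'a \<times> 'a \<Rightarrow> 'r::comm_ring_1" and m :: "'k \<Rightarrow> nat"
  assumes finF: "finite F"
    and Fsub: "F \<subseteq> kg_arr G \<times> {b \<in> kg_arr G. kg_deg G b = m}"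
    and cnz: "\<forall>p\<in>F. c p \<noteq> 0"
    and srcs: "\<forall>(\<alpha>, \<beta>)\<in>F. kg_src G \<alpha> = kg_src G \<beta>"
    and nos: "no_sources G"
    and Hyp: "\<And>u f. set u \<subseteq> Collect (valid_gen G) \<Longrightarrow>
       EZ G (\<lambda>p. (\<Sum>q\<in>F. c q * act G (sw G (fst q)) (act G (swstar G (snd q)) (act G u f)) p)
               - act G u (\<lambda>p'. \<Sum>q\<in>F. c q * act G (sw G (fst q)) (act G (swstar G (snd q)) f) p') p)"
begin

definition AA :: "('a \<times> ('k \<Rightarrow> int) \<Rightarrow> 'r) \<Rightarrow> 'a \<times> ('k \<Rightarrow> int) \<Rightarrow> 'r" where
  "AA f p = (\<Sum>q\<in>F. c q * act G (sw G (fst q)) (act G (swstar G (snd q)) f) p)"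

definition gt :: "'a \<Rightarrow> 'a \<times> ('k \<Rightarrow> int) \<Rightarrow> 'r" where
  "gt \<tau> p = (if kext G \<tau> (fst p) \<and> snd p = (\<lambda>i. int (deg \<tau> i)) then 1 else 0)"

lemma H: "set u \<subseteq> Collect (valid_gen G) \<Longrightarrow> EZ G (\<lambda>p. AA (act G u f) p - act G u (AA f) p)"
  using Hyp unfolding AA_def[abs_def] by simp

lemma F_arr: "q \<in> F \<Longrightarrow> fst q \<in> arr \<and> snd q \<in> arr \<and> deg (snd q) = m"
  using Fsub by auto

lemma long_path: "v \<in> kg_vertices G \<Longrightarrow> \<exists>\<mu>\<in>arr. rng \<mu> = v \<and> deg \<mu> = N"
  using nos unfolding no_sources_def by blast

lemma kext_rng: "kext G l \<nu> \<Longrightarrow> l \<in> arr \<Longrightarrow> \<nu> \<in> arr \<and> rng \<nu> = rng l"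
  unfolding kext_def using comp_arr comp_rng by auto

lemma act_sS: assumes "\<alpha> \<in> arr" "\<beta> \<in> arr"
  shows "act G (sw G \<alpha>) (act G (swstar G \<beta>) f) (\<nu>, z) =
    (if kext G \<alpha> \<nu> \<and> rng (krest G \<alpha> \<nu>) = src \<beta>
     then f (cmp \<beta> (krest G \<alpha> \<nu>), \<lambda>i. z i - int (deg \<alpha> i) + int (deg \<beta> i)) else 0)"
  unfolding act_sw[OF assms(1)] act_swstar[OF assms(2)] using kext_krest[OF _ assms(1), of \<nu>] by auto

lemma AA_nz: assumes "AA h (\<nu>, z) \<noteq> 0" shows "\<exists>q\<in>F. kext G (fst q) \<nu>"
proof (rule ccontr)
  assume "\<not> (\<exists>q\<in>F. kext G (fst q) \<nu>)"
  then have "\<forall>q\<in>F. c q * act G (sw G (fst q)) (act G (swstar G (snd q)) h) (\<nu>, z) = 0"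
  proof (intro ballI)
    fix q assume q: "q \<in> F" and "\<not> (\<exists>q\<in>F. kext G (fst q) \<nu>)"
    then have "\<not> kext G (fst q) \<nu>" by blast
    then show "c q * act G (sw G (fst q)) (act G (swstar G (snd q)) h) (\<nu>, z) = 0"
      using F_arr[OF q] by (simp add: act_sS)
  qed
  then show False using assms unfolding AA_def by simp
qed

lemma AA_key: assumes st: "(\<sigma>, \<tau>) \<in> F" and mu: "\<mu> \<in> arr" "rng \<mu> = src \<sigma>"
  shows "AA (gt \<tau>) (cmp \<sigma> \<mu>, \<lambda>i. int (deg \<sigma> i)) = c (\<sigma>, \<tau>)"
proof -
  have s: "\<sigma> \<in> arr" and t: "\<tau> \<in> arr" "deg \<tau> = m" and ss: "src \<sigma> = src \<tau>"
    using F_arr[OF st] srcs st by auto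
  let ?\<nu> = "cmp \<sigma> \<mu>"
  have T: "c q * act G (sw G (fst q)) (act G (swstar G (snd q)) (gt \<tau>)) (?\<nu>, \<lambda>i. int (deg \<sigma> i))
        = (if q = (\<sigma>, \<tau>) then c (\<sigma>, \<tau>) else 0)" if q: "q \<in> F" for q
  proof -
    obtain \<alpha> \<beta> where qe: "q = (\<alpha>, \<beta>)" by (cases q)
    have a: "\<alpha> \<in> arr" "\<beta> \<in> arr" "deg \<beta> = m" using F_arr q qe by auto
    show ?thesis
    proof (cases "q = (\<sigma>, \<tau>)")
      case True
      have k1: "kext G \<sigma> ?\<nu>" unfolding kext_def using mu by auto
      have r1: "krest G \<sigma> ?\<nu> = \<mu>" using krest_eq s mu by simp
      have k2: "kext G \<tau> (cmp \<tau> \<mu>)" unfolding kext_def using mu ss by auto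
      show ?thesis using True k1 r1 k2 mu ss s t by (simp add: act_sS gt_def)
    next
      case False
      have "act G (sw G \<alpha>) (act G (swstar G \<beta>) (gt \<tau>)) (?\<nu>, \<lambda>i. int (deg \<sigma> i)) = 0"
      proof (rule ccontr)
        assume nz: "act G (sw G \<alpha>) (act G (swstar G \<beta>) (gt \<tau>)) (?\<nu>, \<lambda>i. int (deg \<sigma> i)) \<noteq> 0"
        let ?\<mu>' = "krest G \<alpha> ?\<nu>"
        have k: "kext G \<alpha> ?\<nu>" and r: "rng ?\<mu>' = src \<beta>"
          and g: "gt \<tau> (cmp \<beta> ?\<mu>', \<lambda>i. int (deg \<sigma> i) - int (deg \<alpha> i) + int (deg \<beta> i)) \<noteq> 0"
          using nz unfolding act_sS[OF a(1,2)] by (auto split: if_splits)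
        have kk: "?\<mu>' \<in> arr" "rng ?\<mu>' = src \<alpha>" "?\<nu> = cmp \<alpha> ?\<mu>'" using kext_krest[OF k a(1)] by auto
        from g have g1: "kext G \<tau> (cmp \<beta> ?\<mu>')"
          and g2: "(\<lambda>i. int (deg \<sigma> i) - int (deg \<alpha> i) + int (deg \<beta> i)) = (\<lambda>i. int (deg \<tau> i))"
          by (auto simp: gt_def split: if_splits)
        have "deg \<sigma> = deg \<alpha>"
        proof
          fix i show "deg \<sigma> i = deg \<alpha> i" using fun_cong[OF g2, of i] a(3) t(2) by simp
        qed
        have "\<sigma> = \<alpha> \<and> \<mu> = ?\<mu>'"
          by (rule fact_unique[OF s mu(1) a(1) kk(1)]) (use mu kk \<open>deg \<sigma> = deg \<alpha>\<close> in simp_all)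
        moreover obtain \<rho> where rho: "\<rho> \<in> arr" "rng \<rho> = src \<tau>" "cmp \<beta> ?\<mu>' = cmp \<tau> \<rho>"
          using g1 unfolding kext_def by blast
        have "\<beta> = \<tau> \<and> ?\<mu>' = \<rho>"
          by (rule fact_unique[OF a(2) kk(1) t(1) rho(1)]) (use r rho a(3) t(2) in simp_all)
        ultimately show False using False qe by simp
      qed
      then show ?thesis using False qe by auto
    qed
  qed
  have "AA (gt \<tau>) (?\<nu>, \<lambda>i. int (deg \<sigma> i)) = (\<Sum>q\<in>F. if q = (\<sigma>, \<tau>) then c (\<sigma>, \<tau>) else 0)"
    unfolding AA_def using T by (rule sum.cong[OF refl])
  also have "\<dots> = c (\<sigma>, \<tau>)" using finF st by (simp add: sum.delta')
  finally show ?thesis .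
qed


lemma part1: assumes st: "(\<sigma>, \<tau>) \<in> F" shows "rng \<sigma> = rng \<tau>"
proof (rule ccontr)
  assume ne: "rng \<sigma> \<noteq> rng \<tau>"
  have s: "\<sigma> \<in> arr" and t: "\<tau> \<in> arr" using F_arr[OF st] by auto
  let ?u = "[Pg (rng \<tau>)]"
  have u: "set ?u \<subseteq> Collect (valid_gen G)" using rng_vert[OF t] by (simp add: valid_gen_def)
  have gPg: "act G ?u (gt \<tau>) = gt \<tau>"
  proof (rule ext)
    fix p :: "'a \<times> ('k \<Rightarrow> int)"
    obtain \<xi> z where p: "p = (\<xi>, z)" by (cases p)
    show "act G ?u (gt \<tau>) p = gt \<tau> p"
      using kext_rng[OF _ t, of \<xi>] by (auto simp: p gact_def gcond_def gmap_def gt_def)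
  qed
  from H[OF u, of "gt \<tau>"] obtain N where
    N: "\<forall>\<nu>\<in>arr. \<forall>z. (\<forall>i. N i \<le> deg \<nu> i) \<longrightarrow> AA (act G ?u (gt \<tau>)) (\<nu>, z) - act G ?u (AA (gt \<tau>)) (\<nu>, z) = 0"
    unfolding EZ_def by blast
  obtain \<mu> where \<mu>: "\<mu> \<in> arr" "rng \<mu> = src \<sigma>" "deg \<mu> = N" using long_path[OF src_vert[OF s]] by blast
  have \<nu>: "cmp \<sigma> \<mu> \<in> arr" "rng (cmp \<sigma> \<mu>) = rng \<sigma>" using \<mu> s comp_arr comp_rng by auto
  have "deg (cmp \<sigma> \<mu>) = (\<lambda>i. deg \<sigma> i + deg \<mu> i)" using \<mu> s comp_deg by simp
  then have le: "\<forall>i. N i \<le> deg (cmp \<sigma> \<mu>) i" using \<mu>(3) by simp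
  have "act G ?u (AA (gt \<tau>)) (cmp \<sigma> \<mu>, \<lambda>i. int (deg \<sigma> i)) = 0"
    using \<nu> ne by (simp add: gact_def gcond_def)
  moreover have "AA (gt \<tau>) (cmp \<sigma> \<mu>, \<lambda>i. int (deg \<sigma> i)) = c (\<sigma>, \<tau>)" by (rule AA_key[OF st \<mu>(1,2)])
  ultimately have "c (\<sigma>, \<tau>) = 0" using N \<nu>(1) le gPg by fastforce
  then show False using cnz st by blast
qed

lemma AA_W: assumes "AA h (\<nu>, z) \<noteq> 0" shows "rng \<nu> \<in> rng ` snd ` F"
proof -
  obtain q where q: "q \<in> F" "kext G (fst q) \<nu>" using AA_nz[OF assms] by blast
  have "rng \<nu> = rng (fst q)" using kext_rng[OF q(2)] F_arr[OF q(1)] by simp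
  also have "\<dots> = rng (snd q)" using part1[of "fst q" "snd q"] q(1) by simp
  finally show ?thesis using q(1) by blast
qed

lemma part2: assumes \<mu>0: "\<mu>0 \<in> arr" "src \<mu>0 \<in> rng ` snd ` F" shows "rng \<mu>0 \<in> rng ` snd ` F"
proof (rule ccontr)
  assume nW: "rng \<mu>0 \<notin> rng ` snd ` F"
  obtain \<alpha>0 \<beta>0 where q0: "(\<alpha>0, \<beta>0) \<in> F" "src \<mu>0 = rng \<beta>0" using \<mu>0(2) by auto
  have a: "\<alpha>0 \<in> arr" "\<beta>0 \<in> arr" using F_arr[OF q0(1)] by auto
  have ra: "rng \<alpha>0 = src \<mu>0" using part1[OF q0(1)] q0(2) by simp
  let ?u = "sw G \<mu>0"
  have u: "set ?u \<subseteq> Collect (valid_gen G)" using sw_valid[OF \<mu>0(1)] .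
  from H[OF u, of "gt \<beta>0"] obtain N where
    N: "\<forall>\<nu>\<in>arr. \<forall>z. (\<forall>i. N i \<le> deg \<nu> i) \<longrightarrow> AA (act G ?u (gt \<beta>0)) (\<nu>, z) - act G ?u (AA (gt \<beta>0)) (\<nu>, z) = 0"
    unfolding EZ_def by blast
  obtain \<rho> where \<rho>: "\<rho> \<in> arr" "rng \<rho> = src \<alpha>0" "deg \<rho> = N" using long_path[OF src_vert[OF a(1)]] by blast
  let ?\<xi> = "cmp \<alpha>0 \<rho>"
  have \<xi>: "?\<xi> \<in> arr" "rng ?\<xi> = src \<mu>0" using \<rho> a ra comp_arr comp_rng by auto
  let ?\<nu> = "cmp \<mu>0 ?\<xi>"
  have \<nu>: "?\<nu> \<in> arr" "rng ?\<nu> = rng \<mu>0" using \<xi> \<mu>0(1) comp_arr comp_rng by auto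
  have "deg ?\<xi> = (\<lambda>i. deg \<alpha>0 i + deg \<rho> i)" using \<rho> a comp_deg by simp
  moreover have "deg ?\<nu> = (\<lambda>i. deg \<mu>0 i + deg ?\<xi> i)" using \<xi> \<mu>0(1) comp_deg by simp
  ultimately have le: "\<forall>i. N i \<le> deg ?\<nu> i" using \<rho>(3) by simp
  let ?z = "\<lambda>i. int (deg \<alpha>0 i) + int (deg \<mu>0 i)"
  have k: "kext G \<mu>0 ?\<nu>" unfolding kext_def using \<xi> by auto
  have r: "krest G \<mu>0 ?\<nu> = ?\<xi>" using krest_eq \<mu>0(1) \<xi> by simp
  have "act G ?u (AA (gt \<beta>0)) (?\<nu>, ?z) = AA (gt \<beta>0) (?\<xi>, \<lambda>i. int (deg \<alpha>0 i))"
    unfolding act_sw[OF \<mu>0(1)] using k r by simp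
  also have "\<dots> = c (\<alpha>0, \<beta>0)" by (rule AA_key[OF q0(1) \<rho>(1,2)])
  finally have e1: "act G ?u (AA (gt \<beta>0)) (?\<nu>, ?z) = c (\<alpha>0, \<beta>0)" .
  have e2: "AA (act G ?u (gt \<beta>0)) (?\<nu>, ?z) = 0" using AA_W nW \<nu>(2) by metis
  have "c (\<alpha>0, \<beta>0) = 0" using N \<nu>(1) le e1 e2 by fastforce
  then show False using cnz q0(1) by blast
qed

lemma part3: assumes st: "(\<sigma>, \<tau>) \<in> F" shows "src \<sigma> \<in> rng ` snd ` F"
proof (rule ccontr)
  assume nW: "src \<sigma> \<notin> rng ` snd ` F"
  have s: "\<sigma> \<in> arr" using F_arr[OF st] by auto
  let ?u = "swstar G \<sigma>"
  have u: "set ?u \<subseteq> Collect (valid_gen G)" using swstar_valid[OF s] .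
  from H[OF u, of "gt \<tau>"] obtain N where
    N: "\<forall>\<nu>\<in>arr. \<forall>z. (\<forall>i. N i \<le> deg \<nu> i) \<longrightarrow> AA (act G ?u (gt \<tau>)) (\<nu>, z) - act G ?u (AA (gt \<tau>)) (\<nu>, z) = 0"
    unfolding EZ_def by blast
  obtain \<rho> where \<rho>: "\<rho> \<in> arr" "rng \<rho> = src \<sigma>" "deg \<rho> = N" using long_path[OF src_vert[OF s]] by blast
  have le: "\<forall>i. N i \<le> deg \<rho> i" using \<rho>(3) by simp
  have "act G ?u (AA (gt \<tau>)) (\<rho>, \<lambda>i. 0) = AA (gt \<tau>) (cmp \<sigma> \<rho>, \<lambda>i. int (deg \<sigma> i))"
    unfolding act_swstar[OF s] using \<rho> by simp
  also have "\<dots> = c (\<sigma>, \<tau>)" by (rule AA_key[OF st \<rho>(1,2)])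
  finally have e1: "act G ?u (AA (gt \<tau>)) (\<rho>, \<lambda>i. 0) = c (\<sigma>, \<tau>)" .
  have e2: "AA (act G ?u (gt \<tau>)) (\<rho>, \<lambda>i. 0) = 0" using AA_W nW \<rho>(2) by metis
  have "c (\<sigma>, \<tau>) = 0" using N \<rho>(1) le e1 e2 by fastforce
  then show False using cnz st by blast
qed



lemma comp_list_props:
  "bs \<noteq> [] \<Longrightarrow> set bs \<subseteq> arr \<Longrightarrow> (\<forall>k. Suc k < length bs \<longrightarrow> src (bs ! k) = rng (bs ! Suc k)) \<Longrightarrow>
   kg_comp_list G bs \<in> arr \<and> rng (kg_comp_list G bs) = rng (hd bs) \<and> src (kg_comp_list G bs) = src (last bs)"
proof (induction bs)
  case (Cons b bs)
  show ?case
  proof (cases bs)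
    case Nil then show ?thesis using Cons.prems by simp
  next
    case (Cons v va)
    have ch: "\<forall>k. Suc k < length (v # va) \<longrightarrow> src ((v # va) ! k) = rng ((v # va) ! Suc k)"
    proof (intro allI impI)
      fix k assume "Suc k < length (v # va)"
      then show "src ((v # va) ! k) = rng ((v # va) ! Suc k)"
        using Cons.prems(3)[rule_format, of "Suc k"] \<open>bs = v # va\<close> by simp
    qed
    have IH: "kg_comp_list G (v # va) \<in> arr \<and> rng (kg_comp_list G (v # va)) = rng v \<and> src (kg_comp_list G (v # va)) = src (last (v # va))"
      using Cons.IH Cons.prems ch \<open>bs = v # va\<close> by simp
    have b: "b \<in> arr" using Cons.prems by simp
    have sb: "src b = rng v" using Cons.prems(3)[rule_format, of 0] \<open>bs = v # va\<close> by simp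
    show ?thesis using IH b sb comp_arr comp_rng comp_src \<open>bs = v # va\<close> by simp
  qed
qed simp

lemma part4: assumes ne: "F \<noteq> {}"
  shows "\<exists>ps. ps \<noteq> [] \<and> set ps \<subseteq> F
          \<and> (\<forall>i. Suc i < length ps \<longrightarrow> src (snd (ps ! i)) = rng (snd (ps ! Suc i)))
          \<and> rng (kg_comp_list G (map snd ps)) = src (kg_comp_list G (map snd ps))"
proof -
  have ex: "\<exists>q'. q' \<in> F \<and> rng (snd q') = src (snd q)" if q: "q \<in> F" for q
  proof -
    obtain \<sigma> \<tau> where qe: "q = (\<sigma>, \<tau>)" by (cases q)
    have "src \<sigma> \<in> rng ` snd ` F" using part3 q qe by simp
    then obtain q' where "q' \<in> F" "rng (snd q') = src \<sigma>" by auto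
    moreover have "src \<sigma> = src \<tau>" using srcs q qe by auto
    ultimately show ?thesis using qe by (intro exI[of _ q']) simp
  qed
  define nx where "nx q = (SOME q'. q' \<in> F \<and> rng (snd q') = src (snd q))" for q :: "'a \<times> 'a"
  have nx: "nx q \<in> F \<and> rng (snd (nx q)) = src (snd q)" if "q \<in> F" for q
    unfolding nx_def using someI_ex[OF ex[OF that]] .
  obtain q0 where q0: "q0 \<in> F" using ne by blast
  define sq where "sq n = (nx ^^ n) q0" for n
  have sqF: "sq n \<in> F" for n by (induction n) (auto simp: sq_def q0 nx)
  have sqS: "sq (Suc n) = nx (sq n)" for n by (simp add: sq_def)
  have "\<not> inj sq"
  proof
    assume "inj sq"
    moreover have "finite (range sq)" using finF sqF by (meson finite_subset image_subsetI)
    ultimately have "finite (UNIV :: nat set)" using finite_imageD by blast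
    then show False by simp
  qed
  then obtain i j where ij: "i \<noteq> j" "sq i = sq j" unfolding inj_def by blast
  then obtain i j where ij: "i < j" "sq i = sq j"
    by (metis linorder_neqE_nat)
  define ps where "ps = map sq [i..<j]"
  have len: "length ps = j - i" by (simp add: ps_def)
  have nth: "k < j - i \<Longrightarrow> ps ! k = sq (i + k)" for k by (simp add: ps_def)
  have chain: "\<forall>k. Suc k < length ps \<longrightarrow> src (snd (ps ! k)) = rng (snd (ps ! Suc k))"
  proof (intro allI impI)
    fix k assume k: "Suc k < length ps"
    then have "ps ! k = sq (i + k)" "ps ! Suc k = sq (Suc (i + k))" using nth len by auto
    then show "src (snd (ps ! k)) = rng (snd (ps ! Suc k))" using nx[OF sqF] sqS by simp
  qed
  let ?bs = "map snd ps"
  have bs: "?bs \<noteq> []" "set ?bs \<subseteq> arr" using ij F_arr[OF sqF] by (auto simp: ps_def)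
  have bchain: "\<forall>k. Suc k < length ?bs \<longrightarrow> src (?bs ! k) = rng (?bs ! Suc k)" using chain by simp
  have cl: "rng (kg_comp_list G ?bs) = rng (hd ?bs) \<and> src (kg_comp_list G ?bs) = src (last ?bs)"
    using comp_list_props[OF bs bchain] by simp
  have "hd ?bs = snd (sq i)" using ij by (simp add: ps_def hd_map)
  moreover have "last ?bs = snd (sq (j - 1))" using ij by (simp add: ps_def last_map)
  moreover have "src (snd (sq (j - 1))) = rng (snd (sq j))"
    using nx[OF sqF, of "j - 1"] sqS[of "j - 1"] ij(1) by simp
  ultimately have "rng (kg_comp_list G ?bs) = src (kg_comp_list G ?bs)" using cl ij(2) by simp
  then show ?thesis using bs chain sqF by (intro exI[of _ ps]) (auto simp: ps_def)
qed

end

theorem lemma4p2: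
  fixes G :: "('a, 'k::finite) kgraph"
    and a :: "('a kpgen list \<Rightarrow> 'r::comm_ring_1) set"
    and F :: "('a \<times> 'a) set"
    and c :: "'a \<times> 'a \<Rightarrow> 'r"
    and m :: "'k \<Rightarrow> nat"
  assumes "is_kgraph G" and "row_finite G" and "no_sources G"
    and "a \<in> kp_center G" and "a \<noteq> \<zero>\<^bsub>KP G\<^esub>"
    and "finite F"
    and "F \<subseteq> kg_arr G \<times> {b \<in> kg_arr G. kg_deg G b = m}"
    and "\<forall>p\<in>F. c p \<noteq> 0"
    and "\<forall>(\<alpha>, \<beta>)\<in>F. kg_src G \<alpha> = kg_src G \<beta>"
    and "a = (\<Oplus>\<^bsub>KP G\<^esub> p\<in>F. kp_scal G (c p) \<otimes>\<^bsub>KP G\<^esub> kp_s G (fst p)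
                                \<otimes>\<^bsub>KP G\<^esub> kp_sstar G (snd p))"
  shows "(\<forall>(\<sigma>, \<tau>)\<in>F. kg_rng G \<sigma> = kg_rng G \<tau>)
    \<and> (\<forall>\<mu>\<in>kg_arr G. kg_src G \<mu> \<in> kg_rng G ` snd ` F \<longrightarrow> kg_rng G \<mu> \<in> kg_rng G ` snd ` F)
    \<and> (\<forall>(\<sigma>, \<tau>)\<in>F. \<exists>(\<alpha>, \<beta>)\<in>F. kg_rng G \<alpha> = kg_rng G \<beta> \<and> kg_rng G \<beta> = kg_src G \<sigma>
                                   \<and> kg_src G \<sigma> = kg_src G \<tau>)
    \<and> (\<exists>ps. ps \<noteq> [] \<and> set ps \<subseteq> F
          \<and> (\<forall>i. Suc i < length ps \<longrightarrow> kg_src G (snd (ps ! i)) = kg_rng G (snd (ps ! Suc i)))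
          \<and> kg_rng G (kg_comp_list G (map snd ps)) = kg_src G (kg_comp_list G (map snd ps)))"
proof -
  interpret kg G using assms(1) by (rule kg.intro)
  have rf: "row_finite G" by (fact assms(2))
  interpret R: ring "free_alg G" by (rule free_alg_ring)
  interpret I: ideal "kp_ideal G" "free_alg G" by (rule kp_ideal_ideal[OF rf])
  interpret Q: ring "KP G" by (simp add: KP_def I.quotient_is_ring)
  interpret h: ring_hom_ring "free_alg G" "KP G" "kp_class G"
    by (rule ring_hom_ringI2[OF free_alg_ring _ class_hom[OF rf]]) (simp add: KP_def I.quotient_is_ring)
  have Farr: "fst q \<in> arr \<and> snd q \<in> arr" if "q \<in> F" for q using assms(7) that by auto
  define t where "t q = (fa_mono (c q) [] \<otimes>\<^bsub>free_alg G\<^esub> fa_mono 1 (sw G (fst q))) \<otimes>\<^bsub>free_alg G\<^esub> fa_mono 1 (swstar G (snd q))" for q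
  have c1: "fa_mono (c q) [] \<in> carrier (free_alg G)" for q by (simp add: free_alg_def mono_carrier)
  have c2: "fa_mono 1 (sw G (fst q)) \<in> carrier (free_alg G)" if "q \<in> F" for q
    using Farr[OF that] sw_valid by (simp add: free_alg_def mono_carrier)
  have c3: "fa_mono 1 (swstar G (snd q)) \<in> carrier (free_alg G)" if "q \<in> F" for q
    using Farr[OF that] swstar_valid by (simp add: free_alg_def mono_carrier)
  have tc: "t q \<in> carrier (free_alg G)" if "q \<in> F" for q
    unfolding t_def by (intro R.m_closed c1 c2[OF that] c3[OF that])
  have trm: "kp_scal G (c q) \<otimes>\<^bsub>KP G\<^esub> kp_s G (fst q) \<otimes>\<^bsub>KP G\<^esub> kp_sstar G (snd q) = kp_class G (t q)"
    if "q \<in> F" for q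
    unfolding t_def kp_scal_def kp_s_def kp_sstar_def
    by (simp only: h.hom_mult[OF R.m_closed[OF c1 c2[OF that]] c3[OF that]] h.hom_mult[OF c1 c2[OF that]])
  have homsum: "A \<subseteq> F \<Longrightarrow> finsum (KP G) (\<lambda>q. kp_class G (t q)) A = kp_class G (finsum (free_alg G) t A)" for A
  proof (induction A rule: infinite_finite_induct)
    case (infinite A)
    then show ?case using assms(6) finite_subset by blast
  next
    case empty then show ?case by simp
  next
    case (insert x A)
    have tA: "t \<in> A \<rightarrow> carrier (free_alg G)" using insert tc by auto
    have tA': "(\<lambda>q. kp_class G (t q)) \<in> A \<rightarrow> carrier (KP G)" using tA h.hom_closed by (simp add: Pi_def)
    have tx: "t x \<in> carrier (free_alg G)" using insert tc by auto
    show ?case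
      using insert tA tA' tx by (simp add: Q.finsum_insert R.finsum_insert R.finsum_closed)
  qed
  define a0 where "a0 = finsum (free_alg G) t F"
  have a0c: "a0 \<in> carrier (free_alg G)" unfolding a0_def using tc by (intro R.finsum_closed) auto
  have "a = finsum (KP G) (\<lambda>q. kp_class G (t q)) F"
    unfolding assms(10) by (rule Q.finsum_cong') (use trm tc in auto)
  then have aa0: "a = kp_class G a0" using homsum[of F] by (simp add: a0_def)
  have phit: "phi G (t q) f p = c q * act G (sw G (fst q)) (act G (swstar G (snd q)) f) p" if "q \<in> F" for q f p
  proof -
    have "phi G (t q) f p = phi G (fa_mono (c q) []) (phi G (fa_mono 1 (sw G (fst q))) (phi G (fa_mono 1 (swstar G (snd q))) f)) p"
    proof -
      have d1: "fa_mono (c q) [] \<in> fa_carrier G" and d2: "fa_mono 1 (sw G (fst q)) \<in> fa_carrier G"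
        and d3: "fa_mono 1 (swstar G (snd q)) \<in> fa_carrier G"
        using c1 c2[OF that] c3[OF that] by (simp_all add: free_alg_def)
      show ?thesis unfolding t_def
        by (simp add: free_alg_def phi_mult[OF mult_closed[OF d1 d2] d3] phi_mult_fun[OF d1 d2])
    qed
    then show ?thesis by (simp add: phi_mono_fun)
  qed
  have phisum: "A \<subseteq> F \<Longrightarrow> phi G (finsum (free_alg G) t A) f p = (\<Sum>q\<in>A. phi G (t q) f p)" for A f p
  proof (induction A rule: infinite_finite_induct)
    case (infinite A)
    then show ?case using assms(6) finite_subset by blast
  next
    case empty then show ?case unfolding R.finsum_empty by (simp add: free_alg_def phi_zero)
  next
    case (insert x A)
    have tA: "t \<in> A \<rightarrow> carrier (free_alg G)" using insert tc by auto
    have tx: "t x \<in> carrier (free_alg G)" using insert tc by auto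
    have fc: "finsum (free_alg G) t A \<in> carrier (free_alg G)" using tA by (rule R.finsum_closed)
    have "finsum (free_alg G) t (insert x A) = (\<lambda>w. t x w + finsum (free_alg G) t A w)"
      unfolding R.finsum_insert[OF insert(1,2) tA tx] by (simp add: free_alg_def)
    then show ?case using insert tx fc phi_add[of "t x" G "finsum (free_alg G) t A" f p]
      by (simp add: free_alg_def)
  qed
  have PA: "phi G a0 g = (\<lambda>p. \<Sum>q\<in>F. c q * act G (sw G (fst q)) (act G (swstar G (snd q)) g) p)" for g
    by (rule ext) (simp add: a0_def phisum phit)
  have cen: "kp_class G a0 \<in> kp_center G" using assms(4) aa0 by simp
  have a0c': "a0 \<in> fa_carrier G" using a0c by (simp add: free_alg_def)
  interpret FF: kgF G F c m
  proof (unfold_locales)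
    show "finite F" "F \<subseteq> arr \<times> {b \<in> arr. deg b = m}" "\<forall>p\<in>F. c p \<noteq> 0"
      "\<forall>(\<alpha>, \<beta>)\<in>F. src \<alpha> = src \<beta>" "no_sources G" using assms by auto
    fix u f assume u: "set u \<subseteq> Collect (valid_gen G)"
    show "EZ G (\<lambda>p. (\<Sum>q\<in>F. c q * act G (sw G (fst q)) (act G (swstar G (snd q)) (act G u f)) p)
               - act G u (\<lambda>p'. \<Sum>q\<in>F. c q * act G (sw G (fst q)) (act G (swstar G (snd q)) f) p') p)"
      using central_EZ[OF rf a0c' cen u, of f] by (simp only: PA)
  qed
  have Fne: "F \<noteq> {}"
  proof
    assume "F = {}"
    then have "a = \<zero>\<^bsub>KP G\<^esub>" using assms(10) by simp
    then show False using assms(5) by simp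
  qed
  have P1: "\<forall>(\<sigma>, \<tau>)\<in>F. rng \<sigma> = rng \<tau>" using FF.part1 by blast
  have P2: "\<forall>\<mu>\<in>arr. src \<mu> \<in> rng ` snd ` F \<longrightarrow> rng \<mu> \<in> rng ` snd ` F" using FF.part2 by blast
  have P3: "\<forall>(\<sigma>, \<tau>)\<in>F. \<exists>(\<alpha>, \<beta>)\<in>F. rng \<alpha> = rng \<beta> \<and> rng \<beta> = src \<sigma> \<and> src \<sigma> = src \<tau>"
  proof (intro ballI)
    fix q assume q: "q \<in> F"
    obtain \<sigma> \<tau> where qe: "q = (\<sigma>, \<tau>)" by (cases q)
    have "src \<sigma> \<in> rng ` snd ` F" using FF.part3 q qe by simp
    then obtain \<alpha> \<beta> where ab: "(\<alpha>, \<beta>) \<in> F" "rng \<beta> = src \<sigma>" by auto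
    have "rng \<alpha> = rng \<beta>" using FF.part1[OF ab(1)] .
    moreover have "src \<sigma> = src \<tau>" using assms(9) q qe by auto
    ultimately show "case q of (\<sigma>, \<tau>) \<Rightarrow> \<exists>(\<alpha>, \<beta>)\<in>F. rng \<alpha> = rng \<beta> \<and> rng \<beta> = src \<sigma> \<and> src \<sigma> = src \<tau>"
      using ab qe by (auto intro!: bexI[of _ "(\<alpha>, \<beta>)"])
  qed
  show ?thesis using P1 P2 P3 FF.part4[OF Fne] by blast
qed


end
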